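(* Let $k,m\geqslant1$ and $H_{k,m}(x)=\#\{n\leqslant x:\ H(n)\leqslant k,\ H(n+1)\leqslant m\}$. Then for $x\geqslant2$, $$H_{k,m}(x)=c_{k,m}x+R_{k,m}(x),\qquad c_{k,m}=\prod_p\left(1+\sum_{\nu\geqslant1}\frac{\mathcal{F}_k(p^\nu)+\mathcal{F}_m(p^\nu)}{p^\nu}\right),$$ where $$R_{k,m}(x)\ll\min_{\substack{1\leqslant k_0\leqslant k\\1\leqslant m_0\leqslant m}}\left(\alpha\beta\,\kappa^{\alpha+\beta}x^{\frac1\alpha+\frac1\beta-\frac{1}{\alpha\beta}}(\log x)^2\right),\quad \alpha=2\uparrow\uparrow k_0,\ \beta=2\uparrow\uparrow m_0,$$ with an absolute implied constant, and $\kappa=\exp\left(\sum_p\frac{1}{p\log p}\right)$.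
   Context: $H(n)$ is the height of the factorization tree of $n\geqslant1$: $H(1)=0$ and, for $n=p_1^{\alpha_1}\cdots p_k^{\alpha_k}>1$ with distinct primes $p_i$, $H(n)=1+\max_i H(\alpha_i)$. For $m\geqslant0$, $f_m(n)=1$ if $H(n)\leqslant m$ and $0$ otherwise, and $\mathcal{F}_m$ is defined by $f_m(n)=\sum_{d\mid n}\mathcal{F}_m(d)$ for all $n\geqslant1$. Tetration: $a\uparrow\uparrow0=1$, $a\uparrow\uparrow b=a^{a\uparrow\uparrow(b-1)}$. Products and sums over $p$ run over primes. *)

theory Defs
  imports "HOL-Computational_Algebra.Computational_Algebra" "HOL-Analysis.Analysis"
begin

lemma multiplicity_less_self:
  assumes "prime (p::nat)" "n > 1"
  shows "multiplicity p n < n"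
proof -
  have "multiplicity p n < p ^ multiplicity p n"
    proof -
    have "2 ^ multiplicity p n \<le> p ^ multiplicity p n"
      using assms(1) prime_ge_2_nat power_mono by blast
    then show ?thesis using less_exp[of "multiplicity p n"] by linarith
  qed
  also have "p ^ multiplicity p n \<le> n"
    using assms by (intro dvd_imp_le multiplicity_dvd) auto
  finally show ?thesis .
qed

text \<open>Height of the factorization tree; H(0) is irrelevant (set to 0).\<close>
function H :: "nat \<Rightarrow> nat" where
  "H n = (if n \<le> 1 then 0 else 1 + Max ((\<lambda>p. H (multiplicity p n)) ` prime_factors n))"
  by auto
termination
  by (relation "Wellfounded.measure id") (auto intro: multiplicity_less_self)

declare H.simps[simp del]

definition f :: "nat \<Rightarrow> nat \<Rightarrow> int" where
  "f m n = (if H n \<le> m then 1 else 0)"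

definition F :: "nat \<Rightarrow> nat \<Rightarrow> int" where
  "F m = (THE G. G 0 = 0 \<and> (\<forall>n\<ge>1. f m n = (\<Sum>d | d dvd n. G d)))"

fun tet :: "nat \<Rightarrow> nat \<Rightarrow> nat" where
  "tet a 0 = 1"
| "tet a (Suc b) = a ^ tet a b"

definition Hcount :: "nat \<Rightarrow> nat \<Rightarrow> real \<Rightarrow> nat" where
  "Hcount k m x = card {n::nat. 1 \<le> n \<and> real n \<le> x \<and> H n \<le> k \<and> H (n+1) \<le> m}"

definition c :: "nat \<Rightarrow> nat \<Rightarrow> real" where
  "c k m = lim (\<lambda>N. \<Prod>p\<in>{p. prime p \<and> p \<le> N}.
      (1 + (\<Sum>\<nu>. (real_of_int (F k (p ^ Suc \<nu>)) + real_of_int (F m (p ^ Suc \<nu>))) / real p ^ Suc \<nu>)))"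

definition kappa :: real where
  "kappa = exp (\<Sum>n. if prime n then 1 / (real n * ln (real n)) else 0)"

end

theory Submission
  imports Defs
begin


lemma H_gt1: "n > 1 \<Longrightarrow> H n = 1 + Max ((\<lambda>p. H (multiplicity p n)) ` prime_factors n)"
  by (subst H.simps) simp

lemma H_le1: "n \<le> 1 \<Longrightarrow> H n = 0"
  by (subst H.simps) simp

lemma H_le_iff:
  assumes "n \<ge> 1" "k \<ge> 1"
  shows "H n \<le> k \<longleftrightarrow> (\<forall>p\<in>prime_factors n. H (multiplicity p n) < k)"
proof (cases "n = 1")
  case True then show ?thesis by (simp add: H_le1)
next
  case False
  then have n1: "n > 1" using assms by simp
  have ne: "prime_factors n \<noteq> {}"
  proof
    assume "prime_factors n = {}"
    then have "prime_factorization n = {#}" by simp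
    then have "n = 0 \<or> is_unit n" by (simp only: prime_factorization_empty_iff)
    then show False using n1 by auto
  qed
  have "H n \<le> k \<longleftrightarrow> Max ((\<lambda>p. H (multiplicity p n)) ` prime_factors n) \<le> k - 1"
    using H_gt1[OF n1] assms by auto
  also have "\<dots> \<longleftrightarrow> (\<forall>p\<in>prime_factors n. H (multiplicity p n) \<le> k - 1)"
    using ne by (subst Max_le_iff) auto
  also have "\<dots> \<longleftrightarrow> (\<forall>p\<in>prime_factors n. H (multiplicity p n) < k)"
    using assms by auto
  finally show ?thesis .
qed

lemma prime_factors_pp: "prime (p::nat) \<Longrightarrow> v \<ge> 1 \<Longrightarrow> prime_factors (p ^ v) = {p}"
  by (simp add: prime_factorization_prime_power)

lemma H_prime_power:
  assumes "prime (p::nat)" "v \<ge> 1"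
  shows "H (p ^ v) = 1 + H v"
proof -
  have "p ^ v \<ge> p" using assms prime_gt_1_nat[OF assms(1)] by (intro self_le_power) auto
  then have "p ^ v > 1" using prime_gt_1_nat[OF assms(1)] by linarith
  then show ?thesis using assms by (simp add: H_gt1 prime_factors_pp)
qed

lemma tet_H: "v \<ge> 1 \<Longrightarrow> H v \<ge> j \<Longrightarrow> v \<ge> tet 2 j"
proof (induction j arbitrary: v)
  case 0 then show ?case by simp
next
  case (Suc j)
  have v1: "v > 1"
  proof (rule ccontr)
    assume "\<not> v > 1"
    then have "H v = 0" using H_le1[of v] by simp
    then show False using Suc.prems by simp
  qed
  have ne: "prime_factors v \<noteq> {}"
  proof
    assume "prime_factors v = {}"
    then have "prime_factorization v = {#}" by simp
    then have "v = 0 \<or> is_unit v" by (simp only: prime_factorization_empty_iff)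
    then show False using v1 by auto
  qed
  have "Max ((\<lambda>p. H (multiplicity p v)) ` prime_factors v) \<ge> j"
    using H_gt1[OF v1] Suc.prems by linarith
  moreover have "Max ((\<lambda>p. H (multiplicity p v)) ` prime_factors v) \<in> (\<lambda>p. H (multiplicity p v)) ` prime_factors v"
    using ne by (intro Max_in) auto
  ultimately obtain p where p: "p \<in> prime_factors v" "H (multiplicity p v) \<ge> j"
    by auto
  have pr: "prime p" using p(1) by (simp only: in_prime_factors_iff)
  have "multiplicity p v > 0" using p(1) unfolding prime_factors_multiplicity by blast
  then have mp: "multiplicity p v \<ge> 1" by simp
  have "tet 2 j \<le> multiplicity p v" using Suc.IH[OF mp p(2)] .
  then have "(2::nat) ^ tet 2 j \<le> 2 ^ multiplicity p v" by simp
  also have "\<dots> \<le> p ^ multiplicity p v" using pr prime_ge_2_nat power_mono by blast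
  also have "\<dots> \<le> v" using v1 by (intro dvd_imp_le multiplicity_dvd) auto
  finally show ?case by simp
qed

lemma tet_mono: "a \<le> b \<Longrightarrow> tet 2 a \<le> tet 2 b"
proof (induction b)
  case 0 then show ?case by simp
next
  case (Suc b)
  show ?case
  proof (cases "a = Suc b")
    case False
    then have "tet 2 a \<le> tet 2 b" using Suc by simp
    also have "tet 2 b \<le> 2 ^ tet 2 b" by (simp add: less_imp_le)
    finally show ?thesis by simp
  qed simp
qed

lemma tet_ge2: "j \<ge> 1 \<Longrightarrow> tet 2 j \<ge> 2"
  using tet_mono[of 1 j] by simp

definition u :: "nat \<Rightarrow> nat \<Rightarrow> int" where
  "u k i = (if H i < k then 1 else 0)"

definition phi :: "nat \<Rightarrow> nat \<Rightarrow> int" where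
  "phi k i = (if i = 0 then 1 else u k i - u k (i - 1))"

definition G :: "nat \<Rightarrow> nat \<Rightarrow> int" where
  "G k n = (if n = 0 then 0 else (\<Prod>p\<in>prime_factors n. phi k (multiplicity p n)))"

lemma u_small: "k \<ge> 1 \<Longrightarrow> i < tet 2 k \<Longrightarrow> u k i = 1"
proof -
  assume a: "k \<ge> 1" "i < tet 2 k"
  have "H i < k"
  proof (cases "i = 0")
    case True then show ?thesis using a H_le1[of 0] by simp
  next
    case False
    show ?thesis
    proof (rule ccontr)
      assume "\<not> H i < k"
      then have "tet 2 k \<le> i" using tet_H[of i k] False by simp
      then show False using a by simp
    qed
  qed
  then show ?thesis by (simp add: u_def)
qed

lemma phi_small: "k \<ge> 1 \<Longrightarrow> 1 \<le> i \<Longrightarrow> i < tet 2 k \<Longrightarrow> phi k i = 0"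
  using u_small[of k i] u_small[of k "i - 1"] by (simp add: phi_def)

lemma phi_abs: "\<bar>phi k i\<bar> \<le> 1"
  by (auto simp: phi_def u_def)

lemma sum_phi: "k \<ge> 1 \<Longrightarrow> (\<Sum>j\<le>a. phi k j) = u k a"
proof (induction a)
  case 0 then show ?case by (simp add: phi_def u_def H_le1)
next
  case (Suc a) then show ?case by (simp add: phi_def)
qed

lemma f_prod:
  assumes "n \<ge> 1" "k \<ge> 1"
  shows "f k n = (\<Prod>p\<in>prime_factors n. u k (multiplicity p n))"
proof (cases "\<forall>p\<in>prime_factors n. H (multiplicity p n) < k")
  case True
  then have "(\<Prod>p\<in>prime_factors n. u k (multiplicity p n)) = 1"
    by (intro prod.neutral) (auto simp: u_def)
  then show ?thesis using True H_le_iff[OF assms] by (simp add: f_def)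
next
  case False
  then obtain p where "p \<in> prime_factors n" "\<not> H (multiplicity p n) < k" by auto
  then have "(\<Prod>p\<in>prime_factors n. u k (multiplicity p n)) = 0"
    by (intro prod_zero) (auto simp: u_def)
  moreover have "\<not> H n \<le> k" using False H_le_iff[OF assms] by simp
  ultimately show ?thesis by (simp add: f_def)
qed


definition pw :: "nat set \<Rightarrow> (nat \<Rightarrow> nat) \<Rightarrow> nat" where
  "pw P v = (\<Prod>p\<in>P. p ^ v p)"

lemma pw_pos: "\<forall>p\<in>P. prime p \<Longrightarrow> pw P v > 0"
  unfolding pw_def by (cases "finite P") (auto intro!: prod_pos simp: prime_gt_0_nat)

lemma mult_pw: "finite P \<Longrightarrow> \<forall>p\<in>P. prime p \<Longrightarrow> prime q \<Longrightarrow>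
   multiplicity q (pw P v) = (if q \<in> P then v q else 0)"
  unfolding pw_def by (rule multiplicity_prod_prime_powers) auto

lemma pf_pw: assumes "finite P" "\<forall>p\<in>P. prime p" shows "prime_factors (pw P v) \<subseteq> P"
proof
  fix q assume q: "q \<in> prime_factors (pw P v)"
  then have "prime q" "multiplicity q (pw P v) > 0" unfolding prime_factors_multiplicity by auto
  then show "q \<in> P" using mult_pw[OF assms \<open>prime q\<close>] by (auto split: if_splits)
qed

lemma mult_zero_out: "q \<notin> prime_factors (d::nat) \<Longrightarrow> prime q \<Longrightarrow> multiplicity q d = 0"
  unfolding prime_factors_multiplicity by auto

lemma pw_mult:
  assumes "finite P" "\<forall>p\<in>P. prime p" "d > 0" "prime_factors d \<subseteq> P"
  shows "pw P (\<lambda>p. multiplicity p d) = d"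
proof (rule multiplicity_eq_nat)
  show "pw P (\<lambda>p. multiplicity p d) > 0" using pw_pos assms by blast
  show "d > 0" by fact
  fix q :: nat assume q: "prime q"
  show "multiplicity q (pw P (\<lambda>p. multiplicity p d)) = multiplicity q d"
    using mult_pw[OF assms(1,2) q] mult_zero_out[of q d] q assms(4) by auto
qed

lemma pw_cong: "(\<And>p. p \<in> P \<Longrightarrow> v p = w p) \<Longrightarrow> pw P v = pw P w"
  unfolding pw_def by (rule prod.cong) auto

lemma expand1:
  fixes \<psi> :: "nat \<Rightarrow> nat \<Rightarrow> 'a::comm_semiring_1"
  assumes P: "finite P" "\<forall>p\<in>P. prime p" and R: "\<forall>p\<in>P. finite (R p)"
  shows "(\<Sum>d\<in>{d. d > 0 \<and> prime_factors d \<subseteq> P \<and> (\<forall>p\<in>P. multiplicity p d \<in> R p)}.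
            \<Prod>p\<in>P. \<psi> p (multiplicity p d)) = (\<Prod>p\<in>P. \<Sum>r\<in>R p. \<psi> p r)"
proof -
  define D where "D = {d. d > 0 \<and> prime_factors d \<subseteq> P \<and> (\<forall>p\<in>P. multiplicity p d \<in> R p)}"
  define g where "g = (\<lambda>d. \<Prod>p\<in>P. \<psi> p (multiplicity p d))"
  have "(\<Prod>p\<in>P. \<Sum>r\<in>R p. \<psi> p r) = (\<Sum>v\<in>PiE P R. \<Prod>p\<in>P. \<psi> p (v p))"
    using P R by (intro prod_sum_PiE) auto
  also have "\<dots> = (\<Sum>v\<in>PiE P R. g (pw P v))"
    unfolding g_def using mult_pw[OF P] P by (intro sum.cong prod.cong refl) auto
  also have "\<dots> = (\<Sum>d\<in>D. g d)"
  proof (rule sum.reindex_bij_betw)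
    show "bij_betw (pw P) (PiE P R) D"
      unfolding bij_betw_def
    proof
      show "inj_on (pw P) (PiE P R)"
      proof (rule inj_onI)
        fix v w assume v: "v \<in> PiE P R" and w: "w \<in> PiE P R" and eq: "pw P v = pw P w"
        show "v = w"
        proof (rule PiE_ext[OF v w])
          fix p assume p: "p \<in> P"
          then have "prime p" using P by auto
          then show "v p = w p" using mult_pw[OF P \<open>prime p\<close>, of v] mult_pw[OF P \<open>prime p\<close>, of w] eq p
            by simp
        qed
      qed
      show "pw P ` PiE P R = D"
      proof
        show "pw P ` PiE P R \<subseteq> D"
        proof
          fix d assume "d \<in> pw P ` PiE P R"
          then obtain v where v: "v \<in> PiE P R" "d = pw P v" by auto
          have "\<forall>p\<in>P. multiplicity p d \<in> R p"
            using v mult_pw[OF P] P by (auto simp: PiE_iff)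
          then show "d \<in> D" unfolding D_def using v pw_pos[OF P(2)] pf_pw[OF P] by auto
        qed
        show "D \<subseteq> pw P ` PiE P R"
        proof
          fix d assume d: "d \<in> D"
          define v where "v = restrict (\<lambda>p. multiplicity p d) P"
          have "v \<in> PiE P R" using d unfolding D_def v_def by auto
          moreover have "pw P v = d"
          proof -
            have "pw P v = pw P (\<lambda>p. multiplicity p d)" unfolding v_def by (rule pw_cong) auto
            also have "\<dots> = d" using d P unfolding D_def by (intro pw_mult) auto
            finally show ?thesis .
          qed
          ultimately show "d \<in> pw P ` PiE P R" by force
        qed
      qed
    qed
  qed
  finally show ?thesis unfolding D_def g_def by simp
qed

lemma expand2:
  fixes \<psi> :: "nat \<Rightarrow> nat \<Rightarrow> nat \<Rightarrow> 'a::comm_semiring_1"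
  assumes P: "finite P" "\<forall>p\<in>P. prime p" and R: "\<forall>p\<in>P. finite (R p)"
  shows "(\<Sum>de\<in>{(d,e). d > 0 \<and> e > 0 \<and> prime_factors d \<subseteq> P \<and> prime_factors e \<subseteq> P \<and>
              (\<forall>p\<in>P. (multiplicity p d, multiplicity p e) \<in> R p)}.
            \<Prod>p\<in>P. \<psi> p (multiplicity p (fst de)) (multiplicity p (snd de)))
         = (\<Prod>p\<in>P. \<Sum>r\<in>R p. \<psi> p (fst r) (snd r))"
proof -
  define D where "D = {(d,e). d > 0 \<and> e > 0 \<and> prime_factors d \<subseteq> P \<and> prime_factors e \<subseteq> P \<and>
              (\<forall>p\<in>P. (multiplicity p d, multiplicity p e) \<in> R p)}"
  define g where "g = (\<lambda>de. \<Prod>p\<in>P. \<psi> p (multiplicity p (fst de)) (multiplicity p (snd de)))"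
  define h where "h = (\<lambda>v. (pw P (\<lambda>p. fst (v p)), pw P (\<lambda>p. snd (v p))))"
  have "(\<Prod>p\<in>P. \<Sum>r\<in>R p. \<psi> p (fst r) (snd r)) = (\<Sum>v\<in>PiE P R. \<Prod>p\<in>P. \<psi> p (fst (v p)) (snd (v p)))"
    using P R by (intro prod_sum_PiE) auto
  also have "\<dots> = (\<Sum>v\<in>PiE P R. g (h v))"
    unfolding g_def h_def using mult_pw[OF P] P by (intro sum.cong prod.cong refl) auto
  also have "\<dots> = (\<Sum>d\<in>D. g d)"
  proof (rule sum.reindex_bij_betw)
    show "bij_betw h (PiE P R) D"
      unfolding bij_betw_def
    proof
      show "inj_on h (PiE P R)"
      proof (rule inj_onI)
        fix v w assume v: "v \<in> PiE P R" and w: "w \<in> PiE P R" and eq: "h v = h w"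
        show "v = w"
        proof (rule PiE_ext[OF v w])
          fix p assume p: "p \<in> P"
          then have "prime p" using P by auto
          have "fst (v p) = fst (w p)"
            using mult_pw[OF P \<open>prime p\<close>, of "\<lambda>p. fst (v p)"] mult_pw[OF P \<open>prime p\<close>, of "\<lambda>p. fst (w p)"] eq p
            by (simp add: h_def)
          moreover have "snd (v p) = snd (w p)"
            using mult_pw[OF P \<open>prime p\<close>, of "\<lambda>p. snd (v p)"] mult_pw[OF P \<open>prime p\<close>, of "\<lambda>p. snd (w p)"] eq p
            by (simp add: h_def)
          ultimately show "v p = w p" by (simp add: prod_eq_iff)
        qed
      qed
      show "h ` PiE P R = D"
      proof
        show "h ` PiE P R \<subseteq> D"
        proof
          fix de assume "de \<in> h ` PiE P R"
          then obtain v where v: "v \<in> PiE P R" "de = h v" by auto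
          have "\<forall>p\<in>P. (multiplicity p (fst de), multiplicity p (snd de)) \<in> R p"
            using v mult_pw[OF P] P by (auto simp: PiE_iff h_def)
          then show "de \<in> D" unfolding D_def using v pw_pos[OF P(2)] pf_pw[OF P]
            by (auto simp: h_def)
        qed
        show "D \<subseteq> h ` PiE P R"
        proof
          fix de assume d: "de \<in> D"
          obtain d e where de: "de = (d,e)" by (cases de)
          define v where "v = restrict (\<lambda>p. (multiplicity p d, multiplicity p e)) P"
          have "v \<in> PiE P R" using d unfolding D_def v_def de by auto
          moreover have "h v = de"
          proof -
            have "pw P (\<lambda>p. fst (v p)) = pw P (\<lambda>p. multiplicity p d)" unfolding v_def by (rule pw_cong) auto
            also have "\<dots> = d" using d P unfolding D_def de by (intro pw_mult) auto
            finally have 1: "pw P (\<lambda>p. fst (v p)) = d" .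
            have "pw P (\<lambda>p. snd (v p)) = pw P (\<lambda>p. multiplicity p e)" unfolding v_def by (rule pw_cong) auto
            also have "\<dots> = e" using d P unfolding D_def de by (intro pw_mult) auto
            finally have 2: "pw P (\<lambda>p. snd (v p)) = e" .
            show ?thesis using 1 2 by (simp add: h_def de)
          qed
          ultimately show "de \<in> h ` PiE P R" by force
        qed
      qed
    qed
  qed
  finally show ?thesis unfolding D_def g_def by simp
qed

lemma dvd_iff_mult:
  assumes "(n::nat) > 0"
  shows "d dvd n \<longleftrightarrow> d > 0 \<and> prime_factors d \<subseteq> prime_factors n \<and>
      (\<forall>p\<in>prime_factors n. multiplicity p d \<in> {..multiplicity p n})"
proof
  assume d: "d dvd n"
  then have "d > 0" using assms by (auto intro!: Nat.gr0I)
  moreover have "prime_factors d \<subseteq> prime_factors n"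
    using d assms by (auto simp: in_prime_factors_iff intro: dvd_trans)
  moreover have "\<forall>p\<in>prime_factors n. multiplicity p d \<le> multiplicity p n"
    using d assms by (auto intro!: dvd_imp_multiplicity_le)
  ultimately show "d > 0 \<and> prime_factors d \<subseteq> prime_factors n \<and>
      (\<forall>p\<in>prime_factors n. multiplicity p d \<in> {..multiplicity p n})" by auto
next
  assume a: "d > 0 \<and> prime_factors d \<subseteq> prime_factors n \<and>
      (\<forall>p\<in>prime_factors n. multiplicity p d \<in> {..multiplicity p n})"
  show "d dvd n"
  proof (rule multiplicity_le_imp_dvd)
    show "d \<noteq> 0" using a by simp
    fix q :: nat assume q: "prime q"
    show "multiplicity q d \<le> multiplicity q n"
    proof (cases "q \<in> prime_factors n")
      case True then show ?thesis using a by auto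
    next
      case False
      then have "q \<notin> prime_factors d" using a by auto
      then show ?thesis using mult_zero_out q by simp
    qed
  qed
qed

lemma divisor_sum_mult:
  fixes \<psi> :: "nat \<Rightarrow> nat \<Rightarrow> 'a::comm_semiring_1"
  assumes "(n::nat) > 0"
  shows "(\<Sum>d | d dvd n. \<Prod>p\<in>prime_factors n. \<psi> p (multiplicity p d))
       = (\<Prod>p\<in>prime_factors n. \<Sum>r\<le>multiplicity p n. \<psi> p r)"
proof -
  have "{d. d dvd n} = {d. d > 0 \<and> prime_factors d \<subseteq> prime_factors n \<and>
      (\<forall>p\<in>prime_factors n. multiplicity p d \<in> {..multiplicity p n})}"
    using dvd_iff_mult[OF assms] by blast
  then show ?thesis
    by (simp only:) (rule expand1, auto)
qed

lemma G_ext: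
  assumes "finite P" "prime_factors d \<subseteq> P" "d > 0" "\<forall>p\<in>P. prime p"
  shows "G k d = (\<Prod>p\<in>P. phi k (multiplicity p d))"
proof -
  have "G k d = (\<Prod>p\<in>prime_factors d. phi k (multiplicity p d))" using assms by (simp add: G_def)
  also have "\<dots> = (\<Prod>p\<in>P. phi k (multiplicity p d))"
  proof (rule prod.mono_neutral_left[OF assms(1,2)])
    show "\<forall>i\<in>P - prime_factors d. phi k (multiplicity i d) = 1"
    proof
      fix i assume i: "i \<in> P - prime_factors d"
      have "multiplicity i d = 0" using i mult_zero_out assms(4) by auto
      then show "phi k (multiplicity i d) = 1" by (simp add: phi_def)
    qed
  qed
  finally show ?thesis .
qed

lemma f_sum_G:
  assumes "n \<ge> 1" "k \<ge> 1"
  shows "f k n = (\<Sum>d | d dvd n. G k d)"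
proof -
  have n0: "n > 0" using assms by simp
  have "(\<Sum>d | d dvd n. G k d) = (\<Sum>d | d dvd n. \<Prod>p\<in>prime_factors n. phi k (multiplicity p d))"
  proof (rule sum.cong[OF refl])
    fix d assume "d \<in> {d. d dvd n}"
    then show "G k d = (\<Prod>p\<in>prime_factors n. phi k (multiplicity p d))"
      using dvd_iff_mult[OF n0, of d] by (intro G_ext) (auto simp: in_prime_factors_iff)
  qed
  also have "\<dots> = (\<Prod>p\<in>prime_factors n. \<Sum>r\<le>multiplicity p n. phi k r)"
    by (rule divisor_sum_mult[OF n0])
  also have "\<dots> = (\<Prod>p\<in>prime_factors n. u k (multiplicity p n))"
    using sum_phi[OF assms(2)] by simp
  also have "\<dots> = f k n" using f_prod[OF assms] by simp
  finally show ?thesis by simp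
qed

lemma F_eq_G:
  assumes "k \<ge> 1"
  shows "F k = G k"
  unfolding F_def
proof (rule the_equality)
  show "G k 0 = 0 \<and> (\<forall>n\<ge>1. f k n = (\<Sum>d | d dvd n. G k d))"
    using f_sum_G assms by (simp add: G_def)
next
  fix G' assume a: "G' 0 = 0 \<and> (\<forall>n\<ge>1. f k n = (\<Sum>d | d dvd n. G' d))"
  have "G' n = G k n" for n
  proof (induction n rule: less_induct)
    case (less n)
    show ?case
    proof (cases "n = 0")
      case True then show ?thesis using a by (simp add: G_def)
    next
      case False
      then have n1: "n \<ge> 1" by simp
      have fin: "finite {d. d dvd n \<and> d < n}" using False by (auto intro: finite_subset[OF _ finite_divisors_nat[of n]])
      have split: "{d. d dvd n} = insert n {d. d dvd n \<and> d < n}"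
        using False by (auto dest: dvd_imp_le)
      have e1: "f k n = (\<Sum>d | d dvd n. G' d)" using a n1 by auto
      have "G' n + (\<Sum>d | d dvd n \<and> d < n. G' d) = (\<Sum>d | d dvd n. G' d)"
        using split fin by simp
      also have "\<dots> = (\<Sum>d | d dvd n. G k d)" using e1 f_sum_G[OF n1 assms] by simp
      also have "\<dots> = G k n + (\<Sum>d | d dvd n \<and> d < n. G k d)"
        using split fin by simp
      finally have "G' n + (\<Sum>d | d dvd n \<and> d < n. G' d) = G k n + (\<Sum>d | d dvd n \<and> d < n. G k d)" .
      moreover have "(\<Sum>d | d dvd n \<and> d < n. G' d) = (\<Sum>d | d dvd n \<and> d < n. G k d)"
        using less by (intro sum.cong) auto
      ultimately show ?thesis by simp
    qed
  qed
  then show "G' = G k" by auto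
qed

definition full :: "nat \<Rightarrow> nat \<Rightarrow> bool" where
  "full t d \<longleftrightarrow> d > 0 \<and> (\<forall>p\<in>prime_factors d. multiplicity p d \<ge> t)"

lemma G_abs: "\<bar>G k d\<bar> \<le> 1"
proof -
  have "\<bar>\<Prod>p\<in>prime_factors d. phi k (multiplicity p d)\<bar> \<le> 1"
    unfolding abs_prod by (rule prod_le_1) (auto simp: phi_abs)
  then show ?thesis by (simp add: G_def)
qed

lemma G_support:
  assumes "k \<ge> 1" "G k d \<noteq> 0"
  shows "full (tet 2 k) d"
  unfolding full_def
proof
  show "d > 0" using assms(2) by (cases "d = 0") (auto simp: G_def)
  show "\<forall>p\<in>prime_factors d. tet 2 k \<le> multiplicity p d"
  proof (rule ccontr)
    assume "\<not> ?thesis"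
    then obtain p where p: "p \<in> prime_factors d" "multiplicity p d < tet 2 k" by auto
    have "multiplicity p d \<ge> 1" using p(1) unfolding prime_factors_multiplicity by auto
    then have "phi k (multiplicity p d) = 0" using phi_small[OF assms(1)] p by auto
    then have "G k d = 0" using p(1) \<open>d > 0\<close> by (auto simp: G_def intro!: prod_zero)
    then show False using assms by simp
  qed
qed

lemma full_mono: "full t d \<Longrightarrow> s \<le> t \<Longrightarrow> full s d"
  unfolding full_def by auto


lemma primes_prod_dvd:
  assumes "finite S" "\<forall>p\<in>S. prime (p::nat)" "\<forall>p\<in>S. p dvd m"
  shows "(\<Prod>p\<in>S. p) dvd m"
  using assms
proof (induction S rule: finite_induct)
  case empty then show ?case by simp
next
  case (insert p S)
  have "coprime p (\<Prod>q\<in>S. q)"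
    using insert by (intro prod_coprime_right primes_coprime) auto
  then show ?case using insert by (simp add: divides_mult)
qed

lemma cheb_prod:
  fixes n :: nat
  shows "(\<Prod>p\<in>{p. prime p \<and> n < p \<and> p \<le> 2*n}. p) \<le> 4 ^ n"
proof -
  let ?S = "{p. prime p \<and> n < p \<and> p \<le> 2*n}"
  have fin: "finite ?S" by (rule finite_subset[of _ "{..2*n}"]) auto
  have "\<forall>p\<in>?S. p dvd (2*n choose n)"
  proof
    fix p assume p: "p \<in> ?S"
    have "p dvd fact (2*n)" using p by (simp add: prime_dvd_fact_iff)
    also have "fact (2*n) = fact n * fact n * (2*n choose n)"
      using binomial_fact_lemma[of n "2*n"] by simp
    finally have "p dvd fact n * fact n * (2*n choose n)" .
    moreover have "\<not> p dvd fact n" using p by (simp add: prime_dvd_fact_iff)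
    ultimately show "p dvd (2*n choose n)" using p by (auto simp: prime_dvd_mult_iff)
  qed
  then have "(\<Prod>p\<in>?S. p) dvd (2*n choose n)" using fin by (intro primes_prod_dvd) auto
  then have "(\<Prod>p\<in>?S. p) \<le> (2*n choose n)" by (rule dvd_imp_le) (simp add: zero_less_binomial)
  also have "\<dots> \<le> 2 ^ (2*n)" by (rule binomial_le_pow2)
  also have "\<dots> = 4 ^ n" by (simp add: power_mult)
  finally show ?thesis .
qed

lemma cheb_card:
  fixes n :: nat assumes "n \<ge> 2"
  shows "real (card {p. prime p \<and> n < p \<and> p \<le> 2*n}) * ln n \<le> n * ln 4"
proof -
  let ?S = "{p. prime p \<and> n < p \<and> p \<le> 2*n}"
  have fin: "finite ?S" by (rule finite_subset[of _ "{..2*n}"]) auto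
  have "real (card ?S) * ln n = (\<Sum>p\<in>?S. ln n)" by simp
  also have "\<dots> \<le> (\<Sum>p\<in>?S. ln (real p))"
    using assms by (intro sum_mono) auto
  also have "\<dots> = ln (\<Prod>p\<in>?S. real p)"
    using fin by (subst ln_prod) (auto simp: prime_gt_0_nat)
  also have "\<dots> \<le> ln (4 ^ n)"
  proof -
    have "(\<Prod>p\<in>?S. real p) = real (\<Prod>p\<in>?S. p)" by simp
    also have "\<dots> \<le> real (4 ^ n)" using cheb_prod[of n] by (simp only: of_nat_le_iff)
    also have "\<dots> = 4 ^ n" by simp
    finally show ?thesis using fin by (subst ln_le_cancel_iff) (auto intro!: prod_pos simp: prime_gt_0_nat)
  qed
  also have "\<dots> = n * ln 4" by (simp add: ln_realpow)
  finally show ?thesis .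
qed

definition gam :: "nat \<Rightarrow> real" where
  "gam n = (if prime n then 1 / (real n * ln (real n)) else 0)"

lemma gam_nonneg: "gam n \<ge> 0"
  unfolding gam_def using prime_gt_1_nat[of n] by (auto intro!: mult_nonneg_nonneg)

lemma block_bound:
  fixes n :: nat assumes "n \<ge> 2"
  shows "(\<Sum>p\<in>{n<..2*n}. gam p) \<le> ln 4 / (ln n)^2"
proof -
  let ?S = "{p. prime p \<and> n < p \<and> p \<le> 2*n}"
  have fin: "finite ?S" by (rule finite_subset[of _ "{..2*n}"]) auto
  have ln0: "ln (real n) > 0" using assms by simp
  have "(\<Sum>p\<in>{n<..2*n}. gam p) = (\<Sum>p\<in>?S. 1 / (real p * ln (real p)))"
    unfolding gam_def by (rule sum.mono_neutral_cong_right) auto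
  also have "\<dots> \<le> (\<Sum>p\<in>?S. 1 / (real n * ln (real n)))"
  proof (rule sum_mono)
    fix p assume p: "p \<in> ?S"
    then have "real n \<le> real p" "ln (real n) \<le> ln (real p)" using assms by auto
    then have "real n * ln (real n) \<le> real p * ln (real p)" using ln0 by (intro mult_mono) auto
    moreover have "real n * ln (real n) > 0" using ln0 assms by simp
    ultimately show "1 / (real p * ln (real p)) \<le> 1 / (real n * ln (real n))"
      by (intro divide_left_mono) auto
  qed
  also have "\<dots> = real (card ?S) * ln n / (real n * (ln n)^2)"
    using ln0 assms by (simp add: field_simps power2_eq_square)
  also have "\<dots> \<le> real n * ln 4 / (real n * (ln n)^2)"
    using cheb_card[OF assms] ln0 assms by (intro divide_right_mono) auto
  also have "\<dots> = ln 4 / (ln n)^2" using assms by simp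
  finally show ?thesis .
qed

lemma inv_sq_sum: "(\<Sum>j\<in>{1..J}. 1 / (real j)^2) \<le> 2 - 1 / real (max J 1)"
proof (induction J)
  case 0 then show ?case by simp
next
  case (Suc J)
  show ?case
  proof (cases "J = 0")
    case True then show ?thesis by simp
  next
    case False
    have "(\<Sum>j\<in>{1..Suc J}. 1 / (real j)^2) = (\<Sum>j\<in>{1..J}. 1 / (real j)^2) + 1 / (real J + 1)^2"
      by simp
    also have "\<dots> \<le> 2 - 1 / real J + 1 / (real J + 1)^2" using Suc False by simp
    also have "\<dots> \<le> 2 - 1 / (real J + 1)"
    proof -
      have e: "1 / real J - 1/(real J + 1) = 1 / (real J * (real J + 1))" using False by (simp add: field_simps)
      have "1/(real J + 1)^2 \<le> 1/(real J * (real J + 1))"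
        using False by (intro divide_left_mono) (auto simp: power2_eq_square intro!: mult_pos_pos)
      then have "1 / (real J + 1)^2 \<le> 1 / real J - 1 / (real J + 1)" using e by simp
      then show ?thesis by simp
    qed
    also have "2 - 1 / (real J + 1) = 2 - 1 / real (max (Suc J) 1)" by simp
    finally show ?thesis .
  qed
qed

lemma gam_partial_pow2:
  "(\<Sum>n\<in>{..2^(Suc J)}. gam n) \<le> 1 / (2 * ln 2) + (\<Sum>j\<in>{1..J}. 2 / (ln 2 * (real j)^2))"
proof (induction J)
  case 0
  have "{..2::nat} = {0,1,2}" by auto
  then show ?case by (simp add: gam_def)
next
  case (Suc J)
  have disj: "{..(2::nat)^Suc (Suc J)} = {..2^(Suc J)} \<union> {2^(Suc J)<..2*2^(Suc J)}" by auto
  have "(\<Sum>n\<in>{..2^Suc (Suc J)}. gam n) = (\<Sum>n\<in>{..2^(Suc J)}. gam n) + (\<Sum>n\<in>{2^(Suc J)<..2*2^(Suc J)}. gam n)"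
    by (subst disj, rule sum.union_disjoint) auto
  also have "(\<Sum>n\<in>{2^(Suc J)<..2*2^(Suc J)}. gam n) \<le> ln 4 / (ln (real (2^(Suc J))))^2"
    by (rule block_bound) (simp add: Suc_le_eq)
  also have "ln 4 / (ln (real (2^(Suc J))))^2 = 2 / (ln 2 * (real (Suc J))^2)"
  proof -
    have "ln (4::real) = 2 * ln 2" using ln_realpow[of 2 2] by simp
    moreover have "ln (real (2^(Suc J))) = real (Suc J) * ln 2"
    proof -
      have "ln (real (2^(Suc J))) = ln ((2::real)^(Suc J))" by simp
      also have "\<dots> = real (Suc J) * ln 2" using ln_realpow[of 2 "Suc J"] by simp
      finally show ?thesis .
    qed
    moreover have "ln (2::real) > 0" by simp
    ultimately show ?thesis by (simp add: divide_simps power2_eq_square)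
  qed
  finally show ?case using Suc by simp
qed

lemma gam_summable: "summable gam"
proof (rule summableI_nonneg_bounded)
  show "0 \<le> gam n" for n by (rule gam_nonneg)
  fix N
  have l2: "ln (2::real) > 0" by simp
  have "(\<Sum>i<N. gam i) \<le> (\<Sum>n\<in>{..2^(Suc N)}. gam n)"
  proof (rule sum_mono2)
    show "{..<N} \<subseteq> {..2^(Suc N)}"
    proof
      fix i assume "i \<in> {..<N}"
      then have "i < N" by simp
      also have "N < 2^N" by (rule less_exp)
      also have "(2::nat)^N \<le> 2^Suc N" by simp
      finally show "i \<in> {..2^(Suc N)}" by simp
    qed
  qed (auto simp: gam_nonneg)
  also have "\<dots> \<le> 1 / (2 * ln 2) + (\<Sum>j\<in>{1..N}. 2 / (ln 2 * (real j)^2))"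
    by (rule gam_partial_pow2)
  also have "(\<Sum>j\<in>{1..N}. 2 / (ln 2 * (real j)^2)) = (2 / ln 2) * (\<Sum>j\<in>{1..N}. 1 / (real j)^2)"
    by (simp add: sum_distrib_left field_simps)
  also have "\<dots> \<le> (2 / ln 2) * 2"
  proof -
    have "1 / real (max N 1) \<ge> 0" by simp
    then have "(\<Sum>j\<in>{1..N}. 1 / (real j)^2) \<le> 2" using inv_sq_sum[of N] by linarith
    then show ?thesis using l2 by (intro mult_left_mono) auto
  qed
  finally show "(\<Sum>i<N. gam i) \<le> 1 / (2 * ln 2) + (2 / ln 2) * 2" by simp
qed

lemma kappa_eq: "kappa = exp (suminf gam)"
  unfolding kappa_def gam_def by simp

lemma kappa_ge1: "kappa \<ge> 1"
  unfolding kappa_eq using suminf_nonneg[OF gam_summable gam_nonneg] by simp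

lemma kappa_pos: "kappa > 0"
  using kappa_ge1 by simp

lemma gam_finite_le: "finite S \<Longrightarrow> (\<Sum>n\<in>S. gam n) \<le> suminf gam"
  by (rule sum_le_suminf[OF gam_summable]) (auto simp: gam_nonneg)


lemma D_image:
  assumes P: "finite P" "\<forall>p\<in>P. prime p"
  shows "{d. d > 0 \<and> prime_factors d \<subseteq> P \<and> (\<forall>p\<in>P. multiplicity p d \<in> R p)} \<subseteq> pw P ` PiE P R"
proof
  fix d assume d: "d \<in> {d. d > 0 \<and> prime_factors d \<subseteq> P \<and> (\<forall>p\<in>P. multiplicity p d \<in> R p)}"
  define v where "v = restrict (\<lambda>p. multiplicity p d) P"
  have "v \<in> PiE P R" using d unfolding v_def by auto
  moreover have "pw P v = d"
  proof -
    have "pw P v = pw P (\<lambda>p. multiplicity p d)" unfolding v_def by (rule pw_cong) auto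
    also have "\<dots> = d" using d P by (intro pw_mult) auto
    finally show ?thesis .
  qed
  ultimately show "d \<in> pw P ` PiE P R" by force
qed

lemma full_decomp:
  assumes t: "t \<ge> 1" and d: "full t d"
  shows "\<exists>a b. a \<ge> 1 \<and> full (t+1) b \<and> d = a^t * b"
proof -
  define P where "P = prime_factors d"
  have P: "finite P" "\<forall>p\<in>P. prime p" unfolding P_def by auto
  define e where "e = (\<lambda>p. multiplicity p d)"
  define qa where "qa = (\<lambda>p. if t dvd e p then e p div t else e p div t - 1)"
  define rb where "rb = (\<lambda>p. e p - t * qa p)"
  have d0: "d > 0" using d by (simp add: full_def)
  have ege: "e p \<ge> t" if "p \<in> P" for p using d that unfolding full_def P_def e_def by auto
  have dec: "e p = t * qa p + rb p \<and> (rb p = 0 \<or> rb p \<ge> t + 1)" if "p \<in> P" for p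
  proof (cases "t dvd e p")
    case True
    then show ?thesis unfolding rb_def qa_def by auto
  next
    case False
    define E where "E = e p"
    define Q where "Q = E div t"
    define M where "M = E mod t"
    have m: "E = t * Q + M" unfolding Q_def M_def by simp
    have "M \<noteq> 0" using False unfolding M_def E_def using dvd_eq_mod_eq_0 by blast
    then have M1: "M \<ge> 1" by simp
    have "t div t \<le> E div t" by (rule div_le_mono) (use ege[OF that] in \<open>simp add: E_def\<close>)
    then have Q1: "Q \<ge> 1" using t by (simp add: Q_def)
    have qa: "qa p = Q - 1" using False by (simp add: qa_def Q_def E_def)
    have tq: "t * (Q - 1) = t * Q - t" by (simp add: diff_mult_distrib2)
    have tq2: "t * Q \<ge> t" using Q1 by simp
    have rb: "rb p = M + t" unfolding rb_def qa using m tq tq2 E_def by simp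
    have "e p = t * qa p + rb p" unfolding qa rb using m tq tq2 E_def by simp
    then show ?thesis using rb M1 by simp
  qed
  define a where "a = pw P qa"
  define b where "b = pw P rb"
  have "d = pw P e" unfolding e_def using P d0 by (intro pw_mult[symmetric]) (auto simp: P_def)
  also have "\<dots> = (\<Prod>p\<in>P. p ^ (t * qa p + rb p))"
    unfolding pw_def using dec by (intro prod.cong) auto
  also have "\<dots> = (\<Prod>p\<in>P. (p ^ qa p) ^ t * p ^ rb p)"
    by (intro prod.cong refl) (simp add: power_add power_mult_distrib power_mult[symmetric] mult.commute[of t])
  also have "\<dots> = a ^ t * b"
    unfolding a_def b_def pw_def by (simp add: prod.distrib prod_power_distrib)
  finally have deq: "d = a ^ t * b" .
  have "a \<ge> 1" using pw_pos[OF P(2)] unfolding a_def by (simp add: Suc_le_eq)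
  moreover have "full (t+1) b"
    unfolding full_def
  proof
    show "b > 0" using pw_pos[OF P(2)] unfolding b_def by simp
    show "\<forall>q\<in>prime_factors b. t + 1 \<le> multiplicity q b"
    proof
      fix q assume q: "q \<in> prime_factors b"
      then have qP: "q \<in> P" using pf_pw[OF P] unfolding b_def by auto
      have "multiplicity q b = rb q" unfolding b_def using mult_pw[OF P] qP P by auto
      moreover have "multiplicity q b > 0" using q unfolding prime_factors_multiplicity by auto
      ultimately show "t + 1 \<le> multiplicity q b" using dec[OF qP] by auto
    qed
  qed
  ultimately show ?thesis using deq by blast
qed

lemma mult_le_self: "(d::nat) > 0 \<Longrightarrow> prime p \<Longrightarrow> multiplicity p d \<le> d"
proof (cases "d = 1")
  case False
  assume "d > 0" "prime p"
  then show ?thesis using multiplicity_less_self[of p d] False by simp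
qed simp

lemma geom_bound:
  fixes q :: real
  assumes "0 < q" "q < 1"
  shows "(\<Sum>r\<in>{m..n}. q ^ r) \<le> q ^ m / (1 - q)"
proof (cases "m \<le> n")
  case True
  have "(1 - q) * (\<Sum>r\<in>{m..n}. q ^ r) = q ^ m - q ^ Suc n" by (rule sum_gp_multiplied[OF True])
  also have "\<dots> \<le> q ^ m" using assms by simp
  finally show ?thesis using assms by (simp add: field_simps)
next
  case False then show ?thesis using assms by simp
qed

lemma local_bound:
  fixes p t :: nat
  assumes p: "prime p" and t: "t \<ge> 1"
  shows "(\<Sum>r\<in>{t+1..n}. (real p powr (-1/t)) ^ r) \<le> t * gam p"
proof -
  define L where "L = ln (real p)"
  have L0: "L > 0" unfolding L_def using prime_gt_1_nat[OF p] by simp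
  define q where "q = exp (- L / t)"
  have qeq: "real p powr (-1/t) = q" unfolding q_def L_def powr_def using prime_gt_0_nat[OF p] by simp
  have q0: "q > 0" unfolding q_def by simp
  have q1: "q < 1" unfolding q_def using L0 t by simp
  have qt: "q ^ t = 1 / real p"
  proof -
    have "q ^ t = exp (real t * (- L / t))" unfolding q_def by (subst exp_of_nat_mult) simp
    also have "\<dots> = exp (- L)" using t by simp
    also have "\<dots> = 1 / real p" unfolding L_def using prime_gt_0_nat[OF p] by (simp add: exp_minus inverse_eq_divide)
    finally show ?thesis .
  qed
  have key: "q * (L + t) \<le> t"
  proof -
    have "1 + L / t \<le> exp (L / t)" by (rule exp_ge_add_one_self)
    then have "q * (1 + L / t) \<le> q * exp (L / t)" using q0 by (intro mult_left_mono) auto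
    also have "q * exp (L / t) = 1" unfolding q_def by (simp add: exp_minus field_simps)
    finally have "q * (1 + L / t) \<le> 1" .
    then have "q * (1 + L / t) * t \<le> t" using t by (simp add: mult_left_le_one_le)
    moreover have "q * (1 + L / t) * t = q * (L + t)" using t by (simp add: field_simps)
    ultimately show ?thesis by simp
  qed
  have "(\<Sum>r\<in>{t+1..n}. (real p powr (-1/t)) ^ r) = (\<Sum>r\<in>{t+1..n}. q ^ r)" by (simp only: qeq)
  also have "\<dots> \<le> q ^ (t+1) / (1 - q)" by (rule geom_bound[OF q0 q1])
  also have "q ^ (t+1) / (1 - q) = (1 / real p) * (q / (1 - q))" using qt by (simp add: field_simps)
  also have "q / (1 - q) \<le> t / L"
    using key q1 L0 by (simp add: field_simps)
  then have "(1 / real p) * (q / (1 - q)) \<le> (1 / real p) * (t / L)"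
    by (intro mult_left_mono) auto
  also have "(1 / real p) * (t / L) = t * gam p" unfolding gam_def L_def using p by simp
  finally show ?thesis .
qed

lemma real_pw_powr:
  assumes "finite P" "\<forall>p\<in>P. prime p" "d > 0" "prime_factors d \<subseteq> P"
  shows "real d powr s = (\<Prod>p\<in>P. (real p powr s) ^ multiplicity p d)"
proof -
  have "real d = real (pw P (\<lambda>p. multiplicity p d))" using pw_mult[OF assms] by simp
  also have "\<dots> = (\<Prod>p\<in>P. real p ^ multiplicity p d)" unfolding pw_def by simp
  finally have "real d powr s = (\<Prod>p\<in>P. real p ^ multiplicity p d) powr s" by simp
  also have "\<dots> = (\<Prod>p\<in>P. (real p ^ multiplicity p d) powr s)" by (rule prod_powr_distrib)
  also have "\<dots> = (\<Prod>p\<in>P. (real p powr s) ^ multiplicity p d)"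
  proof (rule prod.cong[OF refl])
    fix p assume "p \<in> P"
    then have p0: "real p > 0" using assms(2) prime_gt_0_nat by auto
    have "(real p ^ multiplicity p d) powr s = (real p powr (real (multiplicity p d))) powr s"
      using p0 by (simp add: powr_realpow)
    also have "\<dots> = real p powr (real (multiplicity p d) * s)" by (simp add: powr_powr)
    also have "\<dots> = (real p powr s) ^ multiplicity p d"
      using p0 by (simp add: powr_power)
    finally show "(real p ^ multiplicity p d) powr s = (real p powr s) ^ multiplicity p d" .
  qed
  finally show ?thesis .
qed

definition Bs :: "nat \<Rightarrow> nat \<Rightarrow> nat set" where
  "Bs t Y = {b. 0 < b \<and> b \<le> Y \<and> full (t+1) b}"

lemma Bs_finite: "finite (Bs t Y)"
  unfolding Bs_def by (rule finite_subset[of _ "{..Y}"]) auto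

lemma euler_ineq:
  assumes t: "t \<ge> 1"
  shows "(\<Sum>b\<in>Bs t Y. real b powr (-1/t)) \<le> kappa ^ t"
proof -
  define P where "P = {p. prime p \<and> p \<le> Y}"
  have P: "finite P" "\<forall>p\<in>P. prime p" unfolding P_def by auto
  define R where "R = (\<lambda>p::nat. insert 0 {t+1..Y})"
  define D where "D = {d. d > 0 \<and> prime_factors d \<subseteq> P \<and> (\<forall>p\<in>P. multiplicity p d \<in> R p)}"
  define \<psi> where "\<psi> = (\<lambda>p r. (real p powr (-1/t)) ^ r)"
  have Dfin: "finite D" unfolding D_def
    by (rule finite_subset[OF D_image[OF P]]) (auto simp: R_def intro!: finite_PiE P)
  have sub: "Bs t Y \<subseteq> D"
  proof
    fix b assume b: "b \<in> Bs t Y"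
    have b0: "b > 0" "b \<le> Y" "full (t+1) b" using b by (auto simp: Bs_def)
    have "prime_factors b \<subseteq> P"
    proof
      fix x assume "x \<in> prime_factors b"
      then have "x dvd b" "prime x" by auto
      then have "x \<le> b" using b0 dvd_imp_le by auto
      then show "x \<in> P" using b0 \<open>prime x\<close> by (simp add: P_def)
    qed
    moreover have "\<forall>p\<in>P. multiplicity p b \<in> R p"
    proof
      fix p assume "p \<in> P"
      then have pp: "prime p" using P by auto
      have le: "multiplicity p b \<le> Y" using mult_le_self[OF b0(1) pp] b0 by simp
      show "multiplicity p b \<in> R p"
      proof (cases "p \<in> prime_factors b")
        case True then show ?thesis using b0 le by (auto simp: R_def full_def)
      next
        case False then show ?thesis using mult_zero_out[OF False pp] by (simp add: R_def)
      qed
    qed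
    ultimately show "b \<in> D" using b0 by (simp add: D_def)
  qed
  have "(\<Sum>b\<in>Bs t Y. real b powr (-1/t)) \<le> (\<Sum>b\<in>D. real b powr (-1/t))"
    by (rule sum_mono2[OF Dfin sub]) auto
  also have "\<dots> = (\<Sum>b\<in>D. \<Prod>p\<in>P. \<psi> p (multiplicity p b))"
    unfolding \<psi>_def using P by (intro sum.cong refl real_pw_powr) (auto simp: D_def)
  also have "\<dots> = (\<Prod>p\<in>P. \<Sum>r\<in>R p. \<psi> p r)"
    unfolding D_def by (rule expand1[OF P]) (simp add: R_def)
  also have "\<dots> \<le> (\<Prod>p\<in>P. exp (t * gam p))"
  proof (rule prod_mono)
    fix p assume pP: "p \<in> P"
    then have pp: "prime p" using P by auto
    have "(\<Sum>r\<in>R p. \<psi> p r) = 1 + (\<Sum>r\<in>{t+1..Y}. \<psi> p r)"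
      unfolding R_def by (subst sum.insert) (auto simp: \<psi>_def)
    also have "\<dots> \<le> 1 + t * gam p" using local_bound[OF pp t, of Y] unfolding \<psi>_def by simp
    also have "\<dots> \<le> exp (t * gam p)" by (rule exp_ge_add_one_self)
    finally have "(\<Sum>r\<in>R p. \<psi> p r) \<le> exp (t * gam p)" .
    moreover have "0 \<le> (\<Sum>r\<in>R p. \<psi> p r)" unfolding \<psi>_def by (intro sum_nonneg) auto
    ultimately show "0 \<le> (\<Sum>r\<in>R p. \<psi> p r) \<and> (\<Sum>r\<in>R p. \<psi> p r) \<le> exp (t * gam p)" by simp
  qed
  also have "\<dots> = exp (t * (\<Sum>p\<in>P. gam p))"
    using P by (simp add: exp_sum sum_distrib_left)
  also have "\<dots> \<le> exp (t * suminf gam)"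
    using gam_finite_le[OF P(1)] by (intro exp_mono mult_left_mono) auto
  also have "\<dots> = kappa ^ t" unfolding kappa_eq by (subst exp_of_nat_mult[symmetric]) simp
  finally show ?thesis .
qed


lemma decomp_sum:
  fixes w :: "nat \<Rightarrow> real"
  assumes t: "t \<ge> 1" and S: "finite S" "\<forall>d\<in>S. full t d" "\<forall>d\<in>S. d \<le> Y"
    and w: "\<forall>d\<in>S. w d \<ge> 0"
  shows "(\<Sum>d\<in>S. w d) \<le> (\<Sum>b\<in>Bs t Y. \<Sum>a\<in>{1..Y}. if a^t*b \<in> S then w (a^t*b) else 0)"
proof -
  have "\<forall>d\<in>S. \<exists>ab. fst ab \<ge> 1 \<and> full (t+1) (snd ab) \<and> d = fst ab ^ t * snd ab"
  proof
    fix d assume "d \<in> S"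
    then obtain a b where "a \<ge> 1" "full (t+1) b" "d = a^t * b" using full_decomp[OF t] S by blast
    then show "\<exists>ab. fst ab \<ge> 1 \<and> full (t+1) (snd ab) \<and> d = fst ab ^ t * snd ab"
      by (intro exI[of _ "(a,b)"]) simp
  qed
  then obtain \<phi> where \<phi>: "\<forall>d\<in>S. fst (\<phi> d) \<ge> 1 \<and> full (t+1) (snd (\<phi> d)) \<and> d = fst (\<phi> d) ^ t * snd (\<phi> d)"
    by metis
  have inj: "inj_on \<phi> S"
  proof (rule inj_onI)
    fix x y assume "x \<in> S" "y \<in> S" "\<phi> x = \<phi> y"
    then show "x = y" using \<phi> by metis
  qed
  define g where "g = (\<lambda>ab. if fst ab ^ t * snd ab \<in> S then w (fst ab ^ t * snd ab) else 0)"
  have g0: "g ab \<ge> 0" for ab unfolding g_def using w by auto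
  have "(\<Sum>d\<in>S. w d) = (\<Sum>d\<in>S. g (\<phi> d))"
    using \<phi> by (intro sum.cong refl) (auto simp: g_def)
  also have "\<dots> = (\<Sum>ab\<in>\<phi> ` S. g ab)" by (simp add: sum.reindex[OF inj])
  also have "\<dots> \<le> (\<Sum>ab\<in>{1..Y} \<times> Bs t Y. g ab)"
  proof (rule sum_mono2)
    show "finite ({1..Y} \<times> Bs t Y)" using Bs_finite by auto
    show "\<phi> ` S \<subseteq> {1..Y} \<times> Bs t Y"
    proof
      fix ab assume "ab \<in> \<phi> ` S"
      then obtain d where d: "d \<in> S" "ab = \<phi> d" by auto
      define a where "a = fst ab"
      define b where "b = snd ab"
      have a1: "a \<ge> 1" and fb: "full (t+1) b" and deq: "d = a^t * b" using \<phi> d by (auto simp: a_def b_def)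
      have b0: "b > 0" using fb by (simp add: full_def)
      have "a \<le> a ^ t" using a1 t by (simp add: self_le_power)
      also have "\<dots> \<le> a ^ t * b" using b0 by simp
      finally have "a \<le> Y" using deq d S by auto
      moreover have "b \<le> Y"
      proof -
        have "a^t \<ge> 1" using a1 by simp
        then have "1 * b \<le> a ^ t * b" by (rule mult_le_mono1)
        then have "b \<le> a ^ t * b" by simp
        moreover have "d \<le> Y" using d S by auto
        ultimately show ?thesis using deq by linarith
      qed
      ultimately show "ab \<in> {1..Y} \<times> Bs t Y"
        using a1 fb b0 by (auto simp: Bs_def a_def b_def mem_Times_iff)
    qed
  qed (use g0 in auto)
  also have "\<dots> = (\<Sum>a\<in>{1..Y}. \<Sum>b\<in>Bs t Y. g (a, b))"
    by (subst sum.cartesian_product) (simp add: case_prod_eta)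
  also have "\<dots> = (\<Sum>b\<in>Bs t Y. \<Sum>a\<in>{1..Y}. g (a, b))"
    by (rule sum.swap)
  finally show ?thesis unfolding g_def by (simp only: fst_conv snd_conv)
qed

lemma inv_sq_tail: "a0 \<ge> 1 \<Longrightarrow> (\<Sum>a\<in>{a0..<a0+n}. 1 / (real a)^2) \<le> 2 / real a0 - 2 / real (a0 + n)"
proof (induction n)
  case 0 then show ?case by simp
next
  case (Suc n)
  have pos: "real (a0 + n) \<ge> 1" using Suc by simp
  have "(\<Sum>a\<in>{a0..<a0+Suc n}. 1 / (real a)^2) = (\<Sum>a\<in>{a0..<a0+n}. 1 / (real a)^2) + 1 / (real (a0+n))^2"
    by simp
  also have "\<dots> \<le> 2 / real a0 - 2 / real (a0 + n) + 1 / (real (a0+n))^2" using Suc by simp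
  also have "1 / (real (a0+n))^2 \<le> 2 / real (a0 + n) - 2 / real (a0 + Suc n)"
  proof -
    define x where "x = real (a0 + n)"
    have x1: "x \<ge> 1" using pos by (simp add: x_def)
    have hx1: "real (a0 + Suc n) = x + 1" by (simp add: x_def)
    have hx: "real (a0 + n) = x" by (simp add: x_def)
    moreover have "1 / x^2 \<le> 2 / x - 2 / (x + 1)"
    proof -
      have "2 / x - 2 / (x + 1) = 2 / (x * (x + 1))" using x1 by (simp add: field_simps)
      moreover have "1 / x^2 \<le> 2 / (x * (x + 1))"
      proof -
        have le: "x * (x+1) \<le> 2 * x^2" using x1 by (simp add: power2_eq_square algebra_simps)
        have p1: "x * (x+1) > 0" "x^2 > 0" using x1 by auto
        show ?thesis using le p1 by (simp add: divide_simps)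
      qed
      ultimately show ?thesis by simp
    qed
    then show ?thesis by (simp only: hx hx1)
  qed
  finally show ?case by simp
qed

lemma tsum_bound:
  assumes a0: "a0 \<ge> 1" and t: "t \<ge> 2"
  shows "(\<Sum>a\<in>{a0..N}. 1 / real a ^ t) \<le> 2 / real a0 ^ (t - 1)"
proof -
  have "(\<Sum>a\<in>{a0..N}. 1 / real a ^ t) \<le> (\<Sum>a\<in>{a0..N}. (1 / real a0 ^ (t-2)) * (1 / (real a)^2))"
  proof (rule sum_mono)
    fix a assume a: "a \<in> {a0..N}"
    then have aa: "real a0 \<le> real a" "real a0 \<ge> 1" using a0 by auto
    have tt: "t - 2 + 2 = t" using t by simp
    have "real a ^ t = real a ^ (t - 2 + 2)" by (simp only: tt)
    also have "\<dots> = real a ^ (t-2) * (real a)^2" by (rule power_add)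
    finally have "real a ^ t = real a ^ (t-2) * (real a)^2" .
    moreover have "real a0 ^ (t-2) \<le> real a ^ (t-2)" using aa by (intro power_mono) auto
    ultimately have "real a0 ^ (t-2) * (real a)^2 \<le> real a ^ t" using aa by (simp add: mult_right_mono)
    then have "1 / real a ^ t \<le> 1 / (real a0 ^ (t-2) * (real a)^2)"
      using aa by (intro divide_left_mono) auto
    then show "1 / real a ^ t \<le> (1 / real a0 ^ (t-2)) * (1 / (real a)^2)" by simp
  qed
  also have "\<dots> = (1 / real a0 ^ (t-2)) * (\<Sum>a\<in>{a0..N}. 1 / (real a)^2)"
    by (simp add: sum_distrib_left)
  finally have s1: "(\<Sum>a\<in>{a0..N}. 1 / real a ^ t) \<le> (1 / real a0 ^ (t-2)) * (\<Sum>a\<in>{a0..N}. 1 / (real a)^2)" .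
  have "(\<Sum>a\<in>{a0..N}. 1 / (real a)^2) \<le> (\<Sum>a\<in>{a0..<a0+(N+1)}. 1 / (real a)^2)"
    by (rule sum_mono2) auto
  also have "\<dots> \<le> 2 / real a0 - 2 / real (a0 + (N+1))" by (rule inv_sq_tail[OF a0])
  also have "\<dots> \<le> 2 / real a0" by simp
  finally have s2: "(\<Sum>a\<in>{a0..N}. 1 / (real a)^2) \<le> 2 / real a0" .
  have "(\<Sum>a\<in>{a0..N}. 1 / real a ^ t) \<le> (1 / real a0 ^ (t-2)) * (2 / real a0)"
    using s1 mult_left_mono[OF s2, of "1 / real a0 ^ (t-2)"] by simp
  also have "\<dots> = 2 / real a0 ^ (t - 1)"
  proof -
    have tt: "t - 1 = Suc (t - 2)" using t by simp
    have "real a0 ^ (t-1) = real a0 ^ (t-2) * real a0" by (simp only: tt power_Suc2)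
    then show ?thesis by simp
  qed
  finally show ?thesis .
qed

lemma root_le:
  fixes a t :: nat and z :: real
  assumes "t \<ge> 1" "real a ^ t \<le> z"
  shows "real a \<le> z powr (1 / t)"
proof (cases "a = 0")
  case True then show ?thesis by simp
next
  case False
  have "real a = (real a ^ t) powr (1 / t)"
    using False assms(1) by (simp add: powr_realpow[symmetric] powr_powr)
  also have "\<dots> \<le> z powr (1 / t)" using assms by (intro powr_mono2) auto
  finally show ?thesis .
qed

lemma count_bound:
  assumes t: "t \<ge> 1" and y: "y > 0"
  shows "real (card {d. 0 < d \<and> real d \<le> y \<and> full t d}) \<le> kappa ^ t * y powr (1 / t)"
proof -
  define Y where "Y = nat \<lfloor>y\<rfloor>"
  define S where "S = {d. 0 < d \<and> real d \<le> y \<and> full t d}"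
  have SY: "\<forall>d\<in>S. d \<le> Y" unfolding S_def Y_def using le_nat_floor by auto
  have Sfin: "finite S" using SY by (intro finite_subset[of S "{..Y}"]) auto
  have "real (card S) = (\<Sum>d\<in>S. (1::real))" by simp
  also have "\<dots> \<le> (\<Sum>b\<in>Bs t Y. \<Sum>a\<in>{1..Y}. if a^t*b \<in> S then 1 else 0)"
    using decomp_sum[OF t Sfin _ SY, of "\<lambda>_. 1"] by (auto simp: S_def)
  also have "\<dots> \<le> (\<Sum>b\<in>Bs t Y. (y / real b) powr (1 / t))"
  proof (rule sum_mono)
    fix b assume b: "b \<in> Bs t Y"
    then have b0: "b > 0" by (simp add: Bs_def)
    define z where "z = (y / real b) powr (1 / t)"
    have z0: "z \<ge> 0" unfolding z_def by simp
    have "(\<Sum>a\<in>{1..Y}. if a^t*b \<in> S then 1 else (0::real)) \<le> (\<Sum>a\<in>{1..Y}. if real a \<le> z then 1 else 0)"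
    proof (rule sum_mono)
      fix a assume "a \<in> {1..Y}"
      show "(if a^t*b \<in> S then 1 else (0::real)) \<le> (if real a \<le> z then 1 else 0)"
      proof (cases "a^t*b \<in> S")
        case True
        then have "real (a^t*b) \<le> y" by (simp add: S_def)
        then have "real a ^ t * real b \<le> y" by simp
        then have "real a ^ t \<le> y / real b" using b0 by (simp add: field_simps)
        then have "real a \<le> z" unfolding z_def by (rule root_le[OF t])
        then show ?thesis by simp
      qed simp
    qed
    also have "\<dots> = (\<Sum>a\<in>{a\<in>{1..Y}. real a \<le> z}. 1)"
      by (rule sum.inter_filter[symmetric]) simp
    also have "\<dots> = real (card {a\<in>{1..Y}. real a \<le> z})" by simp
    also have "\<dots> \<le> real (card {1..nat \<lfloor>z\<rfloor>})"
    proof -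
      have "{a\<in>{1..Y}. real a \<le> z} \<subseteq> {1..nat \<lfloor>z\<rfloor>}" using le_nat_floor by auto
      then show ?thesis by (intro of_nat_mono card_mono) auto
    qed
    also have "\<dots> \<le> z" using z0 by simp
    finally show "(\<Sum>a\<in>{1..Y}. if a^t*b \<in> S then 1 else (0::real)) \<le> (y / real b) powr (1 / t)"
      unfolding z_def .
  qed
  also have "\<dots> = y powr (1 / t) * (\<Sum>b\<in>Bs t Y. real b powr (-1/t))"
    unfolding sum_distrib_left
  proof (rule sum.cong[OF refl])
    fix b assume "b \<in> Bs t Y"
    then have "real b > 0" by (simp add: Bs_def)
    then show "(y / real b) powr (1 / t) = y powr (1 / t) * real b powr (-1/t)"
      using y by (simp add: powr_divide powr_minus_divide)
  qed
  also have "\<dots> \<le> y powr (1 / t) * kappa ^ t"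
    by (intro mult_left_mono euler_ineq t) simp
  finally show ?thesis unfolding S_def by (simp add: mult.commute)
qed

lemma powr_identity:
  fixes y b :: real and t :: nat
  assumes "y > 0" "b > 0"
  shows "(1 / b) * (y / b) powr (1/t - 1) = y powr (1/t - 1) * b powr (-1/t)"
proof -
  have "(1 / b) * (y / b) powr (1/t - 1) = exp (- ln b) * exp ((1/t - 1) * (ln y - ln b))"
    using assms by (simp add: powr_def ln_div exp_minus inverse_eq_divide)
  also have "\<dots> = exp (- ln b + (1/t - 1) * (ln y - ln b))" by (simp add: mult_exp_exp)
  also have "- ln b + (1/t - 1) * (ln y - ln b) = (1/t - 1) * ln y + (-1/t) * ln b"
    by (simp add: algebra_simps)
  also have "exp ((1/t - 1) * ln y + (-1/t) * ln b) = exp ((1/t - 1) * ln y) * exp ((-1/t) * ln b)"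
    by (simp add: mult_exp_exp)
  also have "\<dots> = y powr (1/t - 1) * b powr (-1/t)" using assms by (simp add: powr_def)
  finally show ?thesis .
qed

lemma tail_bound:
  assumes t: "t \<ge> 2" and y: "y \<ge> 1"
  shows "(\<Sum>d\<in>{d. 0 < d \<and> d \<le> Y \<and> y < real d \<and> full t d}. 1 / real d) \<le> 2 * kappa ^ t * y powr (1/t - 1)"
proof -
  have t1: "t \<ge> 1" using t by simp
  define S where "S = {d. 0 < d \<and> d \<le> Y \<and> y < real d \<and> full t d}"
  have SY: "\<forall>d\<in>S. d \<le> Y" unfolding S_def by auto
  have Sfin: "finite S" using SY by (intro finite_subset[of S "{..Y}"]) auto
  have "(\<Sum>d\<in>S. 1 / real d) \<le> (\<Sum>b\<in>Bs t Y. \<Sum>a\<in>{1..Y}. if a^t*b \<in> S then 1 / real (a^t*b) else 0)"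
    using decomp_sum[OF t1 Sfin _ SY, of "\<lambda>d. 1 / real d"] by (auto simp: S_def)
  also have "\<dots> \<le> (\<Sum>b\<in>Bs t Y. 2 * (y powr (1/t - 1) * real b powr (-1/t)))"
  proof (rule sum_mono)
    fix b assume b: "b \<in> Bs t Y"
    then have b0: "real b > 0" by (simp add: Bs_def)
    have y0: "y > 0" using y by simp
    show "(\<Sum>a\<in>{1..Y}. if a^t*b \<in> S then 1 / real (a^t*b) else 0) \<le> 2 * (y powr (1/t - 1) * real b powr (-1/t))"
    proof (cases "real b > y")
      case True
      have "(\<Sum>a\<in>{1..Y}. if a^t*b \<in> S then 1 / real (a^t*b) else 0) \<le> (\<Sum>a\<in>{1..Y}. (1 / real b) * (1 / real a ^ t))"
        by (intro sum_mono) (auto simp: field_simps)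
      also have "\<dots> = (1 / real b) * (\<Sum>a\<in>{1..Y}. 1 / real a ^ t)" by (simp add: sum_distrib_left)
      also have "\<dots> \<le> (1 / real b) * (2 / real 1 ^ (t - 1))"
        using tsum_bound[OF _ t, of 1 Y] b0 by (intro mult_left_mono) auto
      also have "\<dots> = 2 * (1 / real b)" by simp
      also have "1 / real b = real b powr (-1/t) * real b powr (1/t - 1)"
      proof -
        have "real b powr (-1/t) * real b powr (1/t - 1) = real b powr (-1/t + (1/t - 1))"
          by (simp only: powr_add)
        moreover have "(-1/t + (1/t - 1)) = (-1::real)" by simp
        moreover have "real b powr (-1) = 1 / real b" using b0 by (simp add: powr_minus_divide)
        ultimately show ?thesis by simp
      qed
      also have "\<dots> \<le> real b powr (-1/t) * y powr (1/t - 1)"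
        using True y0 t by (intro mult_left_mono powr_mono2') (auto simp: field_simps)
      finally show ?thesis by (simp add: mult.commute)
    next
      case False
      define z where "z = (y / real b) powr (1 / t)"
      have z1: "z \<ge> 1" unfolding z_def using False b0 by (intro ge_one_powr_ge_zero) auto
      define a0 where "a0 = nat \<lfloor>z\<rfloor> + 1"
      have a01: "a0 \<ge> 1" by (simp add: a0_def)
      have za0: "z \<le> real a0" unfolding a0_def using z1 by linarith
      have "(\<Sum>a\<in>{1..Y}. if a^t*b \<in> S then 1 / real (a^t*b) else 0)
            \<le> (\<Sum>a\<in>{1..Y}. if a0 \<le> a then (1 / real b) * (1 / real a ^ t) else 0)"
      proof (rule sum_mono)
        fix a assume "a \<in> {1..Y}"
        show "(if a^t*b \<in> S then 1 / real (a^t*b) else 0) \<le> (if a0 \<le> a then (1 / real b) * (1 / real a ^ t) else 0)"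
        proof (cases "a^t*b \<in> S")
          case True
          then have "y < real a ^ t * real b" by (simp add: S_def)
          then have lt: "y / real b < real a ^ t" using b0 by (simp add: field_simps)
          have "z < real a"
          proof (rule ccontr)
            assume "\<not> z < real a"
            then have "real a \<le> z" by simp
            then have "real a ^ t \<le> z ^ t" by (intro power_mono) auto
            also have "z ^ t = y / real b"
              unfolding z_def using t1 y0 b0 by (simp add: powr_power)
            finally show False using lt by simp
          qed
          moreover have "real_of_int \<lfloor>z\<rfloor> \<le> z" by (rule of_int_floor_le)
          ultimately have "real_of_int \<lfloor>z\<rfloor> < real a" by linarith
          then have "\<lfloor>z\<rfloor> < int a" by (metis of_int_less_iff of_int_of_nat_eq)
          moreover have "\<lfloor>z\<rfloor> \<ge> 0" using z1 by simp
          ultimately have "nat \<lfloor>z\<rfloor> < a" by linarith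
          then have "a0 \<le> a" unfolding a0_def by simp
          then show ?thesis using True by (simp add: field_simps)
        qed auto
      qed
      also have "\<dots> = (\<Sum>a\<in>{a\<in>{1..Y}. a0 \<le> a}. (1 / real b) * (1 / real a ^ t))"
        by (rule sum.inter_filter[symmetric]) simp
      also have "{a\<in>{1..Y}. a0 \<le> a} = {a0..Y}" using a01 by auto
      also have "(\<Sum>a\<in>{a0..Y}. (1 / real b) * (1 / real a ^ t)) = (1 / real b) * (\<Sum>a\<in>{a0..Y}. 1 / real a ^ t)"
        by (simp add: sum_distrib_left)
      also have "\<dots> \<le> (1 / real b) * (2 / real a0 ^ (t - 1))"
        using tsum_bound[OF a01 t] b0 by (intro mult_left_mono) auto
      also have "\<dots> \<le> (1 / real b) * (2 / z ^ (t - 1))"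
        using z1 za0 b0 by (intro mult_left_mono divide_left_mono power_mono) auto
      also have "z ^ (t - 1) = (y / real b) powr (real (t - 1) * (1 / t))"
        unfolding z_def using y0 b0 by (simp add: powr_power)
      also have "real (t - 1) * (1 / real t) = 1 - 1/t" using t by (simp add: of_nat_diff field_simps)
      also have "(1 / real b) * (2 / (y / real b) powr (1 - 1/t)) = 2 * ((1 / real b) * (y / real b) powr (1/t - 1))"
      proof -
        have "(y / real b) powr (1/t - 1) * (y / real b) powr (1 - 1/t) = (y / real b) powr ((1/t - 1) + (1 - 1/t))"
          by (simp only: powr_add)
        also have "\<dots> = 1" using y0 b0 by simp
        finally have "(y / real b) powr (1/t - 1) = 1 / (y / real b) powr (1 - 1/t)"
          using y0 b0 by (simp add: eq_divide_eq)
        then show ?thesis by simp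
      qed
      also have "\<dots> = 2 * (y powr (1/t - 1) * real b powr (-1/t))"
        using powr_identity[OF y0 b0, of t] by simp
      finally show ?thesis .
    qed
  qed
  also have "\<dots> = 2 * y powr (1/t - 1) * (\<Sum>b\<in>Bs t Y. real b powr (-1/t))"
    by (simp add: sum_distrib_left mult.assoc)
  also have "\<dots> \<le> 2 * y powr (1/t - 1) * kappa ^ t"
    by (intro mult_left_mono euler_ineq t1) simp
  finally show ?thesis unfolding S_def by (simp add: mult_ac)
qed

lemma Z_bound:
  assumes t: "t \<ge> 2"
  shows "(\<Sum>d\<in>{d. 0 < d \<and> d \<le> Y \<and> full t d}. 1 / real d) \<le> 1 + 2 * kappa ^ t"
proof -
  have fin: "finite {d. 0 < d \<and> d \<le> Y \<and> full t d}" by (rule finite_subset[of _ "{..Y}"]) auto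
  have eq: "{d. 0 < d \<and> d \<le> Y \<and> full t d} = {d. 0 < d \<and> d \<le> Y \<and> full t d \<and> d \<le> 1} \<union> {d. 0 < d \<and> d \<le> Y \<and> 1 < real d \<and> full t d}"
    by auto
  have "(\<Sum>d\<in>{d. 0 < d \<and> d \<le> Y \<and> full t d}. 1 / real d) =
      (\<Sum>d\<in>{d. 0 < d \<and> d \<le> Y \<and> full t d \<and> d \<le> 1}. 1 / real d) + (\<Sum>d\<in>{d. 0 < d \<and> d \<le> Y \<and> 1 < real d \<and> full t d}. 1 / real d)"
    by (subst eq, rule sum.union_disjoint) (auto intro: finite_subset[of _ "{..Y}"])
  also have "(\<Sum>d\<in>{d. 0 < d \<and> d \<le> Y \<and> full t d \<and> d \<le> 1}. 1 / real d) \<le> 1"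
  proof -
    have "{d. 0 < d \<and> d \<le> Y \<and> full t d \<and> d \<le> 1} \<subseteq> {1}" by auto
    then have "(\<Sum>d\<in>{d. 0 < d \<and> d \<le> Y \<and> full t d \<and> d \<le> 1}. 1 / real d) \<le> (\<Sum>d\<in>{1::nat}. 1 / real d)"
      by (intro sum_mono2) auto
    then show ?thesis by simp
  qed
  also have "(\<Sum>d\<in>{d. 0 < d \<and> d \<le> Y \<and> 1 < real d \<and> full t d}. 1 / real d) \<le> 2 * kappa ^ t * 1 powr (1/t - 1)"
    by (rule tail_bound[OF t]) simp
  finally show ?thesis by simp
qed


lemma ap_card:
  fixes q s N :: nat assumes q: "q > 0"
  shows "card {j\<in>{1..N}. q dvd j + s} = (N + s) div q - s div q"
proof -
  define A where "A = {j\<in>{1..N}. q dvd j + s}"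
  define B where "B = {s div q <.. (N + s) div q}"
  have "bij_betw (\<lambda>j. (j + s) div q) A B"
    unfolding bij_betw_def
  proof
    show "inj_on (\<lambda>j. (j + s) div q) A"
    proof (rule inj_onI)
      fix j j' assume j: "j \<in> A" and j': "j' \<in> A" and eq: "(j + s) div q = (j' + s) div q"
      have "j + s = (j + s) div q * q" using j by (simp add: A_def)
      also have "\<dots> = (j' + s) div q * q" using eq by simp
      also have "\<dots> = j' + s" using j' by (simp add: A_def)
      finally show "j = j'" by simp
    qed
    show "(\<lambda>j. (j + s) div q) ` A = B"
    proof
      show "(\<lambda>j. (j + s) div q) ` A \<subseteq> B"
      proof
        fix i assume "i \<in> (\<lambda>j. (j + s) div q) ` A"
        then obtain j where j: "j \<in> A" "i = (j + s) div q" by auto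
        have jd: "q dvd j + s" "1 \<le> j" "j \<le> N" using j by (auto simp: A_def)
        have "i * q = j + s" using j(2) jd(1) by simp
        then have "s < i * q" using jd by simp
        then have "s div q < i" using q by (simp add: div_less_iff_less_mult)
        moreover have "i \<le> (N + s) div q" using j(2) jd by (simp add: div_le_mono)
        ultimately show "i \<in> B" by (simp add: B_def)
      qed
      show "B \<subseteq> (\<lambda>j. (j + s) div q) ` A"
      proof
        fix i assume "i \<in> B"
        then have i1: "s div q < i" and i2: "i \<le> (N + s) div q" by (auto simp: B_def)
        have a1: "s < i * q" using i1 q by (simp add: div_less_iff_less_mult)
        have a2: "i * q \<le> N + s" using i2 q by (simp add: less_eq_div_iff_mult_less_eq)
        define j where "j = i * q - s"
        have "j + s = i * q" using a1 by (simp add: j_def)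
        then have "j \<in> A" "(j + s) div q = i" using a1 a2 q by (auto simp: A_def j_def)
        then show "i \<in> (\<lambda>j. (j + s) div q) ` A" by force
      qed
    qed
  qed
  then have "card A = card B" by (rule bij_betw_same_card)
  then show ?thesis by (simp add: A_def B_def)
qed

lemma ap_count:
  fixes q s N :: nat assumes q: "q > 0"
  shows "real N / q - 1 \<le> real (card {j\<in>{1..N}. q dvd j + s})"
    and "real (card {j\<in>{1..N}. q dvd j + s}) \<le> real N / q + 1"
proof -
  define A1 where "A1 = (N + s) div q"
  define A0 where "A0 = s div q"
  have le: "A0 \<le> A1" unfolding A0_def A1_def by (simp add: div_le_mono)
  have c: "real (card {j\<in>{1..N}. q dvd j + s}) = real A1 - real A0"
    using ap_card[OF q, of N s] le by (simp add: A0_def A1_def of_nat_diff)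
  have m1: "N + s = q * A1 + (N + s) mod q" unfolding A1_def by simp
  have m0: "s = q * A0 + s mod q" unfolding A0_def by simp
  have r1: "(N + s) mod q < q" "s mod q < q" using q by auto
  have e1: "real N + real s = real q * real A1 + real ((N + s) mod q)"
    using arg_cong[OF m1, of real] by simp
  have e0: "real s = real q * real A0 + real (s mod q)"
    using arg_cong[OF m0, of real] by simp
  have r1': "real ((N + s) mod q) < real q" "real (s mod q) < real q" using r1 by auto
  have qp: "real q > 0" using q by simp
  have nn: "real ((N + s) mod q) \<ge> 0" "real (s mod q) \<ge> 0" by auto
  have "real q * real A1 - real q * real A0 > real N - real q"
    using e1 e0 r1' nn by linarith
  then have "real q * (real A1 - real A0) > real N - real q" by (simp add: right_diff_distrib)
  then have "real A1 - real A0 > (real N - real q) / real q" using qp by (simp add: field_simps)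
  then show "real N / q - 1 \<le> real (card {j\<in>{1..N}. q dvd j + s})"
    using c qp by (simp add: diff_divide_distrib)
  have "real q * real A1 - real q * real A0 < real N + real q"
    using e1 e0 r1' nn by linarith
  then have "real q * (real A1 - real A0) < real N + real q" by (simp add: right_diff_distrib)
  then have "real A1 - real A0 < (real N + real q) / real q" using qp by (simp add: field_simps)
  then show "real (card {j\<in>{1..N}. q dvd j + s}) \<le> real N / q + 1"
    using c qp by (simp add: add_divide_distrib)
qed

lemma T_noncoprime:
  assumes "\<not> coprime d (e::nat)"
  shows "{n\<in>{1..X}. d dvd n \<and> e dvd n + 1} = {}"
proof (rule ccontr)
  assume "{n\<in>{1..X}. d dvd n \<and> e dvd n + 1} \<noteq> {}"
  then obtain n where n: "d dvd n" "e dvd n + 1" by auto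
  have "coprime d e"
  proof (rule coprimeI)
    fix c assume "c dvd d" "c dvd e"
    then have "c dvd n" "c dvd n + 1" using n by (auto intro: dvd_trans)
    then have "c dvd 1" using dvd_add_right_iff by blast
    then show "is_unit c" by simp
  qed
  then show False using assms by simp
qed

lemma T_bound:
  fixes d e :: nat and x :: real
  assumes d: "d \<ge> 1" and e: "e \<ge> 1" and cop: "coprime d e" and x: "x \<ge> 1"
  shows "\<bar>real (card {n\<in>{1..nat \<lfloor>x\<rfloor>}. d dvd n \<and> e dvd n + 1}) - x / (real d * real e)\<bar> \<le> 3"
proof -
  define X where "X = nat \<lfloor>x\<rfloor>"
  obtain s r where sr: "d * s = e * r + gcd d e" using bezout_nat[of d e] d by auto
  then have sr1: "d * s = e * r + 1" using cop by simp
  have cop': "coprime e d" using cop by (simp add: coprime_commute)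
  have iff: "e dvd d * j + 1 \<longleftrightarrow> e dvd j + s" for j
  proof -
    have "d * (j + s) = (d * j + 1) + e * r" using sr1 by (simp add: algebra_simps)
    then have "e dvd d * (j + s) \<longleftrightarrow> e dvd d * j + 1" by (metis dvd_add_left_iff dvd_triv_left)
    moreover have "e dvd d * (j + s) \<longleftrightarrow> e dvd j + s"
      using coprime_dvd_mult_right_iff[OF cop'] by simp
    ultimately show ?thesis by simp
  qed
  have seteq: "{n\<in>{1..X}. d dvd n \<and> e dvd n + 1} = (\<lambda>j. d * j) ` {j\<in>{1..X div d}. e dvd j + s}"
  proof
    show "{n\<in>{1..X}. d dvd n \<and> e dvd n + 1} \<subseteq> (\<lambda>j. d * j) ` {j\<in>{1..X div d}. e dvd j + s}"
    proof
      fix n assume n: "n \<in> {n\<in>{1..X}. d dvd n \<and> e dvd n + 1}"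
      then obtain j where j: "n = d * j" by auto
      have "1 \<le> j" using n j by (cases "j = 0") auto
      moreover have "j \<le> X div d" using n j d by (simp add: less_eq_div_iff_mult_less_eq mult.commute)
      moreover have "e dvd j + s" using n j iff by simp
      ultimately show "n \<in> (\<lambda>j. d * j) ` {j\<in>{1..X div d}. e dvd j + s}" using j by auto
    qed
    show "(\<lambda>j. d * j) ` {j\<in>{1..X div d}. e dvd j + s} \<subseteq> {n\<in>{1..X}. d dvd n \<and> e dvd n + 1}"
    proof
      fix n assume "n \<in> (\<lambda>j. d * j) ` {j\<in>{1..X div d}. e dvd j + s}"
      then obtain j where j: "n = d * j" "1 \<le> j" "j \<le> X div d" "e dvd j + s" by auto
      have "d * j \<le> X" using j(3) d by (simp add: less_eq_div_iff_mult_less_eq mult.commute)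
      moreover have "1 \<le> d * j" using j d by simp
      ultimately show "n \<in> {n\<in>{1..X}. d dvd n \<and> e dvd n + 1}" using j iff by auto
    qed
  qed
  have inj: "inj_on (\<lambda>j. d * j) {j\<in>{1..X div d}. e dvd j + s}" using d by (auto intro: inj_onI)
  have cardeq: "card {n\<in>{1..X}. d dvd n \<and> e dvd n + 1} = card {j\<in>{1..X div d}. e dvd j + s}"
    unfolding seteq by (rule card_image[OF inj])
  define Q where "Q = X div d"
  have lo: "real Q / e - 1 \<le> real (card {j\<in>{1..Q}. e dvd j + s})"
    and hi: "real (card {j\<in>{1..Q}. e dvd j + s}) \<le> real Q / e + 1"
    using ap_count[of e Q s] e by auto
  have dp: "real d \<ge> 1" "real e \<ge> 1" using d e by auto
  have Xx: "real X \<le> x" "x < real X + 1" unfolding X_def using x by linarith+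
  have Qd: "real Q * real d \<le> real X" "real X < (real Q + 1) * real d"
  proof -
    have "X = Q * d + X mod d" unfolding Q_def by simp
    moreover have "X mod d < d" using d by simp
    ultimately show "real Q * real d \<le> real X" "real X < (real Q + 1) * real d"
      by (metis le_add1 of_nat_le_iff of_nat_mult, (metis add_less_cancel_left distrib_right mult_1 of_nat_add of_nat_less_iff of_nat_mult))
  qed
  have q_hi: "real Q / real e \<le> x / (real d * real e)"
  proof -
    have "real Q \<le> x / real d" using Qd Xx dp by (simp add: field_simps)
    then have "real Q / real e \<le> (x / real d) / real e" using dp by (intro divide_right_mono) auto
    then show ?thesis by simp
  qed
  have q_lo: "real Q / real e \<ge> x / (real d * real e) - 2"
  proof -
    have "(real Q + 1) * real d = real Q * real d + real d" by (simp add: algebra_simps)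
    then have "x < real Q * real d + 2 * real d" using Qd Xx dp by linarith
    then have "x < (real Q + 2) * real d" by (simp add: algebra_simps)
    then have "x / real d < real Q + 2" using dp by (simp add: field_simps)
    then have "x / real d / real e < (real Q + 2) / real e" using dp by (intro divide_strict_right_mono) auto
    also have "(real Q + 2) / real e \<le> real Q / real e + 2"
    proof -
      have "(real Q + 2) / real e = real Q / real e + 2 / real e" by (simp add: add_divide_distrib)
      moreover have "2 / real e \<le> 2" using dp by (simp add: divide_le_eq)
      ultimately show ?thesis by linarith
    qed
    finally show ?thesis by simp
  qed
  show ?thesis
    using lo hi q_hi q_lo cardeq unfolding Q_def X_def by (simp add: abs_le_iff)
qed

lemma Tbig_bound:
  fixes e :: nat and x :: real
  assumes e: "e \<ge> 1" and x: "x \<ge> 1" and eX: "e \<le> nat \<lfloor>x\<rfloor> + 1"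
  shows "real (card {n\<in>{1..nat \<lfloor>x\<rfloor>}. e dvd n + 1}) \<le> 3 * x / real e"
proof -
  define X where "X = nat \<lfloor>x\<rfloor>"
  have "real (card {n\<in>{1..X}. e dvd n + 1}) \<le> real X / e + 1" using ap_count(2)[of e X 1] e by simp
  also have "\<dots> \<le> x / e + (real X + 1) / e"
  proof -
    have "real X \<le> x" unfolding X_def using x by linarith
    then have "real X / e \<le> x / e" using e by (intro divide_right_mono) auto
    moreover have "1 \<le> (real X + 1) / e" using eX e unfolding X_def by (simp add: field_simps)
    ultimately show ?thesis by simp
  qed
  also have "\<dots> \<le> x / e + 2 * x / e"
  proof -
    have "real X + 1 \<le> 2 * x" unfolding X_def using x by linarith
    then have "(real X + 1) / e \<le> 2 * x / e" using e by (intro divide_right_mono) auto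
    then show ?thesis by simp
  qed
  also have "\<dots> = 3 * x / e" by (simp add: field_simps)
  finally show ?thesis unfolding X_def .
qed


definition gR :: "nat \<Rightarrow> nat \<Rightarrow> real" where "gR k d = real_of_int (G k d)"

definition ind :: "nat \<Rightarrow> nat \<Rightarrow> real" where "ind t d = (if full t d then 1 else 0)"

definition wp :: "nat \<Rightarrow> nat \<Rightarrow> nat \<times> nat \<Rightarrow> real" where
  "wp k m de = (if coprime (fst de) (snd de) then gR k (fst de) * gR m (snd de) / (real (fst de) * real (snd de)) else 0)"

definition boxs :: "nat \<Rightarrow> nat \<Rightarrow> nat \<Rightarrow> nat \<Rightarrow> real" where
  "boxs k m D E = (\<Sum>de\<in>{1..D}\<times>{1..E}. wp k m de)"

definition tau :: "nat \<Rightarrow> nat \<Rightarrow> real \<Rightarrow> real \<Rightarrow> real" where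
  "tau a b y z = 2 * kappa ^ a * y powr (1/a - 1) * (1 + 2 * kappa ^ b) + (1 + 2 * kappa ^ a) * (2 * kappa ^ b * z powr (1/b - 1))"

lemma gR_bound: assumes "k \<ge> 1" "a \<le> tet 2 k" shows "\<bar>gR k d\<bar> \<le> ind a d"
proof (cases "G k d = 0")
  case True then show ?thesis by (simp add: gR_def ind_def)
next
  case False
  then have "full a d" using G_support[OF assms(1) False] full_mono assms(2) by blast
  then show ?thesis using G_abs[of k d] by (simp add: gR_def ind_def)
qed

lemma ind_nonneg: "ind t d \<ge> 0" by (simp add: ind_def)

lemma wp_bound:
  assumes "k \<ge> 1" "m \<ge> 1" "a \<le> tet 2 k" "b \<le> tet 2 m"
  shows "\<bar>wp k m (d, e)\<bar> \<le> (ind a d / real d) * (ind b e / real e)"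
proof -
  have "\<bar>gR k d * gR m e\<bar> \<le> ind a d * ind b e"
    unfolding abs_mult by (intro mult_mono gR_bound assms) (auto simp: ind_nonneg)
  then have "\<bar>gR k d * gR m e / (real d * real e)\<bar> \<le> ind a d * ind b e / (real d * real e)"
    by (simp add: abs_divide divide_right_mono)
  then show ?thesis by (auto simp: wp_def ind_def)
qed

lemma ind_sum_tail:
  assumes "t \<ge> 2" "y \<ge> 1"
  shows "(\<Sum>d\<in>{nat \<lfloor>y\<rfloor><..D'}. ind t d / real d) \<le> 2 * kappa ^ t * y powr (1/t - 1)"
proof -
  have "(\<Sum>d\<in>{nat \<lfloor>y\<rfloor><..D'}. ind t d / real d) = (\<Sum>d\<in>{d. 0 < d \<and> d \<le> D' \<and> y < real d \<and> full t d}. 1 / real d)"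
  proof (rule sum.mono_neutral_cong_right)
    show "{d. 0 < d \<and> d \<le> D' \<and> y < real d \<and> full t d} \<subseteq> {nat \<lfloor>y\<rfloor><..D'}"
      using assms by (auto simp: nat_less_iff floor_less_iff)
  qed (auto simp: ind_def full_def nat_less_iff floor_less_iff)
  also have "\<dots> \<le> 2 * kappa ^ t * y powr (1/t - 1)" by (rule tail_bound[OF assms])
  finally show ?thesis .
qed

lemma ind_sum_Z:
  assumes "t \<ge> 2"
  shows "(\<Sum>d\<in>{1..D'}. ind t d / real d) \<le> 1 + 2 * kappa ^ t"
proof -
  have "(\<Sum>d\<in>{1..D'}. ind t d / real d) = (\<Sum>d\<in>{d. 0 < d \<and> d \<le> D' \<and> full t d}. 1 / real d)"
    by (rule sum.mono_neutral_cong_right) (auto simp: ind_def full_def)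
  also have "\<dots> \<le> 1 + 2 * kappa ^ t" by (rule Z_bound[OF assms])
  finally show ?thesis .
qed

lemma diff_bound:
  assumes km: "k \<ge> 1" "m \<ge> 1" "a \<le> tet 2 k" "b \<le> tet 2 m" and ab: "a \<ge> 2" "b \<ge> 2"
    and yz: "y \<ge> 1" "z \<ge> 1" and DE: "nat \<lfloor>y\<rfloor> \<le> D'" "nat \<lfloor>z\<rfloor> \<le> E'"
  shows "(\<Sum>de\<in>{1..D'}\<times>{1..E'} - {1..nat \<lfloor>y\<rfloor>}\<times>{1..nat \<lfloor>z\<rfloor>}. \<bar>wp k m de\<bar>) \<le> tau a b y z"
proof -
  define D where "D = nat \<lfloor>y\<rfloor>"
  define E where "E = nat \<lfloor>z\<rfloor>"
  define U1 where "U1 = {D<..D'} \<times> {1..E'}"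
  define U2 where "U2 = {1..D'} \<times> {E<..E'}"
  define v where "v = (\<lambda>de::nat\<times>nat. (ind a (fst de) / real (fst de)) * (ind b (snd de) / real (snd de)))"
  have v0: "v de \<ge> 0" for de unfolding v_def by (auto simp: ind_def)
  have sub: "{1..D'}\<times>{1..E'} - {1..D}\<times>{1..E} \<subseteq> U1 \<union> U2" unfolding U1_def U2_def by auto
  have "(\<Sum>de\<in>{1..D'}\<times>{1..E'} - {1..D}\<times>{1..E}. \<bar>wp k m de\<bar>) \<le> (\<Sum>de\<in>{1..D'}\<times>{1..E'} - {1..D}\<times>{1..E}. v de)"
  proof (rule sum_mono)
    fix de assume "de \<in> {1..D'}\<times>{1..E'} - {1..D}\<times>{1..E}"
    obtain d e where "de = (d, e)" by (cases de)
    then show "\<bar>wp k m de\<bar> \<le> v de" using wp_bound[OF km] by (simp add: v_def)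
  qed
  also have "\<dots> \<le> (\<Sum>de\<in>U1 \<union> U2. v de)"
    by (rule sum_mono2) (use sub v0 in \<open>auto simp: U1_def U2_def\<close>)
  also have "\<dots> \<le> (\<Sum>de\<in>U1. v de) + (\<Sum>de\<in>U2. v de)"
  proof -
    have "(\<Sum>de\<in>U1 \<union> U2. v de) + (\<Sum>de\<in>U1 \<inter> U2. v de) = (\<Sum>de\<in>U1. v de) + (\<Sum>de\<in>U2. v de)"
      by (rule sum.union_inter) (auto simp: U1_def U2_def)
    moreover have "(\<Sum>de\<in>U1 \<inter> U2. v de) \<ge> 0" using v0 by (simp add: sum_nonneg)
    ultimately show ?thesis by linarith
  qed
  also have "(\<Sum>de\<in>U1. v de) = (\<Sum>d\<in>{D<..D'}. ind a d / real d) * (\<Sum>e\<in>{1..E'}. ind b e / real e)"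
    unfolding U1_def v_def sum_product by (subst sum.cartesian_product) (simp add: case_prod_unfold)
  also have "(\<Sum>de\<in>U2. v de) = (\<Sum>d\<in>{1..D'}. ind a d / real d) * (\<Sum>e\<in>{E<..E'}. ind b e / real e)"
    unfolding U2_def v_def sum_product by (subst sum.cartesian_product) (simp add: case_prod_unfold)
  also have "(\<Sum>d\<in>{D<..D'}. ind a d / real d) * (\<Sum>e\<in>{1..E'}. ind b e / real e)
      \<le> (2 * kappa ^ a * y powr (1/a - 1)) * (1 + 2 * kappa ^ b)"
    unfolding D_def
    by (intro mult_mono ind_sum_tail ind_sum_Z ab yz sum_nonneg) (auto simp: ind_def kappa_pos less_imp_le intro!: mult_nonneg_nonneg zero_le_power)
  also have "(\<Sum>d\<in>{1..D'}. ind a d / real d) * (\<Sum>e\<in>{E<..E'}. ind b e / real e)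
      \<le> (1 + 2 * kappa ^ a) * (2 * kappa ^ b * z powr (1/b - 1))"
    unfolding E_def
    by (intro mult_mono ind_sum_tail ind_sum_Z ab yz sum_nonneg) (auto simp: ind_def kappa_pos less_imp_le intro!: mult_nonneg_nonneg zero_le_power)
  finally show ?thesis unfolding tau_def D_def E_def by (simp add: mult.assoc)
qed

lemma box_diff:
  assumes km: "k \<ge> 1" "m \<ge> 1" "a \<le> tet 2 k" "b \<le> tet 2 m" and ab: "a \<ge> 2" "b \<ge> 2"
    and yz: "y \<ge> 1" "z \<ge> 1" and DE: "nat \<lfloor>y\<rfloor> \<le> D'" "nat \<lfloor>z\<rfloor> \<le> E'"
  shows "\<bar>boxs k m D' E' - boxs k m (nat \<lfloor>y\<rfloor>) (nat \<lfloor>z\<rfloor>)\<bar> \<le> tau a b y z"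
proof -
  have sub: "{1..nat \<lfloor>y\<rfloor>}\<times>{1..nat \<lfloor>z\<rfloor>} \<subseteq> {1..D'}\<times>{1..E'}" using DE by auto
  have "boxs k m D' E' - boxs k m (nat \<lfloor>y\<rfloor>) (nat \<lfloor>z\<rfloor>) = (\<Sum>de\<in>{1..D'}\<times>{1..E'} - {1..nat \<lfloor>y\<rfloor>}\<times>{1..nat \<lfloor>z\<rfloor>}. wp k m de)"
  proof -
    have "sum (wp k m) ({1..D'}\<times>{1..E'}) = sum (wp k m) ({1..D'}\<times>{1..E'} - {1..nat \<lfloor>y\<rfloor>}\<times>{1..nat \<lfloor>z\<rfloor>}) + sum (wp k m) ({1..nat \<lfloor>y\<rfloor>}\<times>{1..nat \<lfloor>z\<rfloor>})"
      by (rule sum.subset_diff[OF sub]) simp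
    then show ?thesis unfolding boxs_def by simp
  qed
  also have "\<bar>\<dots>\<bar> \<le> (\<Sum>de\<in>{1..D'}\<times>{1..E'} - {1..nat \<lfloor>y\<rfloor>}\<times>{1..nat \<lfloor>z\<rfloor>}. \<bar>wp k m de\<bar>)"
    by (rule sum_abs)
  also have "\<dots> \<le> tau a b y z" by (rule diff_bound[OF assms])
  finally show ?thesis .
qed

lemma tau_lim: "a \<ge> 2 \<Longrightarrow> b \<ge> 2 \<Longrightarrow> (\<lambda>L. tau a b (real L) (real L)) \<longlonglongrightarrow> 0"
proof -
  assume ab: "a \<ge> 2" "b \<ge> 2"
  have ea: "1 / real a - 1 < 0" and eb: "1 / real b - 1 < 0" using ab by auto
  have l1: "(\<lambda>L. real L powr (1/a - 1)) \<longlonglongrightarrow> 0"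
    by (rule tendsto_neg_powr[OF ea filterlim_real_sequentially])
  have l2: "(\<lambda>L. real L powr (1/b - 1)) \<longlonglongrightarrow> 0"
    by (rule tendsto_neg_powr[OF eb filterlim_real_sequentially])
  have "(\<lambda>L. tau a b (real L) (real L)) \<longlonglongrightarrow>
     2 * kappa ^ a * 0 * (1 + 2 * kappa ^ b) + (1 + 2 * kappa ^ a) * (2 * kappa ^ b * 0)"
    unfolding tau_def by (intro tendsto_intros l1 l2)
  then show ?thesis by simp
qed

lemma nat_floor_real: "nat \<lfloor>real (L::nat)\<rfloor> = L" by simp

lemma box_convergent:
  assumes km: "k \<ge> 1" "m \<ge> 1"
  shows "convergent (\<lambda>L. boxs k m L L)"
proof -
  have t2: "2 \<le> tet 2 k" "2 \<le> tet 2 m" using tet_ge2 km by auto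
  have bd: "\<bar>boxs k m L' L' - boxs k m L L\<bar> \<le> tau 2 2 (real L) (real L)" if "L \<ge> 1" "L \<le> L'" for L L'
    using box_diff[OF km t2, of "real L" "real L" L' L'] that by simp
  have "Cauchy (\<lambda>L. boxs k m L L)"
  proof (rule CauchyI)
    fix e :: real assume e: "e > 0"
    have "eventually (\<lambda>L. tau 2 2 (real L) (real L) < e / 2) sequentially"
      using tau_lim[of 2 2] e by (intro order_tendstoD(2)) auto
    then obtain M0 where M0: "\<forall>L\<ge>M0. tau 2 2 (real L) (real L) < e / 2"
      unfolding eventually_sequentially by auto
    define M where "M = max M0 1"
    have tM: "tau 2 2 (real M) (real M) < e / 2" using M0 by (simp add: M_def)
    show "\<exists>M. \<forall>p\<ge>M. \<forall>q\<ge>M. norm (boxs k m p p - boxs k m q q) < e"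
    proof (intro exI[of _ M] allI impI)
      fix p q assume p: "p \<ge> M" and q: "q \<ge> M"
      have "\<bar>boxs k m p p - boxs k m M M\<bar> \<le> tau 2 2 (real M) (real M)"
        using bd[of M p] p by (simp add: M_def)
      moreover have "\<bar>boxs k m q q - boxs k m M M\<bar> \<le> tau 2 2 (real M) (real M)"
        using bd[of M q] q by (simp add: M_def)
      ultimately show "norm (boxs k m p p - boxs k m q q) < e" using tM by simp
    qed
  qed
  then show ?thesis by (rule Cauchy_convergent)
qed

definition Sc :: "nat \<Rightarrow> nat \<Rightarrow> real" where "Sc k m = lim (\<lambda>L. boxs k m L L)"

lemma Sc_bound:
  assumes km: "k \<ge> 1" "m \<ge> 1" "a \<le> tet 2 k" "b \<le> tet 2 m" and ab: "a \<ge> 2" "b \<ge> 2"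
    and yz: "y \<ge> 1" "z \<ge> 1"
  shows "\<bar>Sc k m - boxs k m (nat \<lfloor>y\<rfloor>) (nat \<lfloor>z\<rfloor>)\<bar> \<le> tau a b y z"
proof -
  have lim: "(\<lambda>L. boxs k m L L) \<longlonglongrightarrow> Sc k m"
    unfolding Sc_def using box_convergent[OF km(1,2)] by (simp add: convergent_LIMSEQ_iff)
  have "(\<lambda>L. \<bar>boxs k m L L - boxs k m (nat \<lfloor>y\<rfloor>) (nat \<lfloor>z\<rfloor>)\<bar>) \<longlonglongrightarrow> \<bar>Sc k m - boxs k m (nat \<lfloor>y\<rfloor>) (nat \<lfloor>z\<rfloor>)\<bar>"
    by (intro tendsto_intros lim)
  then show ?thesis
  proof (rule LIMSEQ_le_const2)
    show "\<exists>N. \<forall>L\<ge>N. \<bar>boxs k m L L - boxs k m (nat \<lfloor>y\<rfloor>) (nat \<lfloor>z\<rfloor>)\<bar> \<le> tau a b y z"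
      using box_diff[OF assms] by (intro exI[of _ "max (nat \<lfloor>y\<rfloor>) (nat \<lfloor>z\<rfloor>)"]) auto
  qed
qed


definition PN :: "nat \<Rightarrow> nat set" where "PN N = {p. prime p \<and> p \<le> N}"

definition aterm :: "nat \<Rightarrow> nat \<Rightarrow> nat \<Rightarrow> nat \<Rightarrow> real" where
  "aterm k m p \<nu> = (real_of_int (F k (p ^ Suc \<nu>)) + real_of_int (F m (p ^ Suc \<nu>))) / real p ^ Suc \<nu>"

definition RM :: "nat \<Rightarrow> (nat \<times> nat) set" where
  "RM M = {(i,j). i \<le> M \<and> j \<le> M \<and> (i = 0 \<or> j = 0)}"

definition CP :: "nat \<Rightarrow> nat \<Rightarrow> (nat \<times> nat) set" where
  "CP N M = {(d,e). d > 0 \<and> e > 0 \<and> prime_factors d \<subseteq> PN N \<and> prime_factors e \<subseteq> PN N \<and>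
              (\<forall>p\<in>PN N. (multiplicity p d, multiplicity p e) \<in> RM M)}"

lemma c_unfold: "c k m = lim (\<lambda>N. \<Prod>p\<in>PN N. (1 + suminf (aterm k m p)))"
  unfolding c_def PN_def aterm_def by simp

lemma PN_props: "finite (PN N)" "\<forall>p\<in>PN N. prime p"
  unfolding PN_def by auto

lemma G_pp: "prime p \<Longrightarrow> i \<ge> 1 \<Longrightarrow> G k (p ^ i) = phi k i"
  using prime_factors_pp[of p i] by (simp add: G_def prime_gt_0_nat)

lemma aterm_eq:
  assumes "k \<ge> 1" "m \<ge> 1" "prime p"
  shows "aterm k m p \<nu> = (real_of_int (phi k (Suc \<nu>)) + real_of_int (phi m (Suc \<nu>))) / real p ^ Suc \<nu>"
proof -
  have "G k (p ^ Suc \<nu>) = phi k (Suc \<nu>)" by (rule G_pp[OF assms(3)]) simp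
  moreover have "G m (p ^ Suc \<nu>) = phi m (Suc \<nu>)" by (rule G_pp[OF assms(3)]) simp
  ultimately show ?thesis unfolding aterm_def F_eq_G[OF assms(1)] F_eq_G[OF assms(2)] by (simp only:)
qed

lemma aterm_summable:
  assumes "k \<ge> 1" "m \<ge> 1" "prime p"
  shows "summable (aterm k m p)"
proof (rule summable_comparison_test')
  have p1: "real p > 1" using prime_gt_1_nat[OF assms(3)] by simp
  show "summable (\<lambda>\<nu>. 2 * (1 / real p) ^ Suc \<nu>)"
    using p1 by (intro summable_mult summable_Suc_iff[THEN iffD2] summable_geometric) auto
  fix \<nu> :: nat
  have "\<bar>real_of_int (phi k (Suc \<nu>)) + real_of_int (phi m (Suc \<nu>))\<bar> \<le> 2"
    using phi_abs[of k "Suc \<nu>"] phi_abs[of m "Suc \<nu>"] by linarith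
  then have "\<bar>real_of_int (phi k (Suc \<nu>)) + real_of_int (phi m (Suc \<nu>))\<bar> / real p ^ Suc \<nu> \<le> 2 / real p ^ Suc \<nu>"
    using p1 by (intro divide_right_mono) auto
  then show "norm (aterm k m p \<nu>) \<le> 2 * (1 / real p) ^ Suc \<nu>"
    unfolding aterm_eq[OF assms] using p1 by (simp add: abs_divide power_one_over)
qed

lemma RM_sum:
  fixes \<psi> :: "nat \<Rightarrow> nat \<Rightarrow> real"
  shows "(\<Sum>r\<in>RM M. \<psi> (fst r) (snd r)) = \<psi> 0 0 + (\<Sum>\<nu><M. \<psi> (Suc \<nu>) 0) + (\<Sum>\<nu><M. \<psi> 0 (Suc \<nu>))"
proof -
  define A where "A = (\<lambda>\<nu>. (Suc \<nu>, 0::nat)) ` {..<M}"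
  define B where "B = (\<lambda>\<nu>. (0::nat, Suc \<nu>)) ` {..<M}"
  have eq: "RM M = insert (0,0) (A \<union> B)"
  proof
    show "RM M \<subseteq> insert (0,0) (A \<union> B)"
    proof
      fix r assume r: "r \<in> RM M"
      obtain i j where ij: "r = (i,j)" by (cases r)
      show "r \<in> insert (0,0) (A \<union> B)"
      proof (cases "i = 0")
        case True
        show ?thesis
        proof (cases "j = 0")
          case False
          then have "r = (0, Suc (j - 1))" "j - 1 < M" using True ij r by (auto simp: RM_def)
          then show ?thesis unfolding B_def by blast
        qed (use True ij in simp)
      next
        case False
        then have "j = 0" using ij r by (auto simp: RM_def)
        then have "r = (Suc (i - 1), 0)" "i - 1 < M" using False ij r by (auto simp: RM_def)
        then show ?thesis unfolding A_def by blast
      qed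
    qed
    show "insert (0,0) (A \<union> B) \<subseteq> RM M" unfolding A_def B_def RM_def by auto
  qed
  have "(\<Sum>r\<in>RM M. \<psi> (fst r) (snd r)) = \<psi> 0 0 + (\<Sum>r\<in>A \<union> B. \<psi> (fst r) (snd r))"
    unfolding eq by (subst sum.insert) (auto simp: A_def B_def)
  also have "(\<Sum>r\<in>A \<union> B. \<psi> (fst r) (snd r)) = (\<Sum>r\<in>A. \<psi> (fst r) (snd r)) + (\<Sum>r\<in>B. \<psi> (fst r) (snd r))"
    by (rule sum.union_disjoint) (auto simp: A_def B_def)
  also have "(\<Sum>r\<in>A. \<psi> (fst r) (snd r)) = (\<Sum>\<nu><M. \<psi> (Suc \<nu>) 0)"
    unfolding A_def by (subst sum.reindex) (auto intro: inj_onI)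
  also have "(\<Sum>r\<in>B. \<psi> (fst r) (snd r)) = (\<Sum>\<nu><M. \<psi> 0 (Suc \<nu>))"
    unfolding B_def by (subst sum.reindex) (auto intro: inj_onI)
  finally show ?thesis by simp
qed

lemma CP_coprime:
  assumes "(d, e) \<in> CP N M"
  shows "coprime d e"
proof (rule ccontr)
  assume nc: "\<not> coprime d e"
  then have "gcd d e \<noteq> 1" by (simp add: coprime_iff_gcd_eq_1)
  then obtain p where p: "prime p" "p dvd gcd d e" using prime_factor_nat by blast
  have d0: "d > 0" "e > 0" using assms by (auto simp: CP_def)
  have pd: "p \<in> prime_factors d" "p \<in> prime_factors e" using p d0 by (auto simp: in_prime_factors_iff)
  then have pP: "p \<in> PN N" using assms by (auto simp: CP_def)
  have "multiplicity p d > 0" "multiplicity p e > 0" using pd unfolding prime_factors_multiplicity by auto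
  then show False using assms pP by (auto simp: CP_def RM_def)
qed

lemma partial_eq:
  assumes km: "k \<ge> 1" "m \<ge> 1"
  shows "(\<Prod>p\<in>PN N. 1 + (\<Sum>\<nu><M. aterm k m p \<nu>)) = (\<Sum>de\<in>CP N M. wp k m de)"
proof -
  define \<psi> where "\<psi> = (\<lambda>(p::nat) i j. real_of_int (phi k i) * real_of_int (phi m j) / real p ^ (i + j))"
  have P: "finite (PN N)" "\<forall>p\<in>PN N. prime p" by (rule PN_props)+
  have fin: "\<forall>p\<in>PN N. finite (RM M)" by (auto simp: RM_def intro: finite_subset[of _ "{..M}\<times>{..M}"])
  have "(\<Prod>p\<in>PN N. 1 + (\<Sum>\<nu><M. aterm k m p \<nu>)) = (\<Prod>p\<in>PN N. \<Sum>r\<in>RM M. \<psi> p (fst r) (snd r))"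
  proof (rule prod.cong[OF refl])
    fix p assume "p \<in> PN N"
    then have pp: "prime p" using P by auto
    have "(\<Sum>r\<in>RM M. \<psi> p (fst r) (snd r)) = \<psi> p 0 0 + (\<Sum>\<nu><M. \<psi> p (Suc \<nu>) 0) + (\<Sum>\<nu><M. \<psi> p 0 (Suc \<nu>))"
      by (rule RM_sum)
    also have "\<dots> = 1 + (\<Sum>\<nu><M. aterm k m p \<nu>)"
      by (simp add: \<psi>_def aterm_eq[OF km pp] phi_def[of _ 0] sum.distrib add_divide_distrib)
    finally show "1 + (\<Sum>\<nu><M. aterm k m p \<nu>) = (\<Sum>r\<in>RM M. \<psi> p (fst r) (snd r))" by simp
  qed
  also have "\<dots> = (\<Sum>de\<in>CP N M. \<Prod>p\<in>PN N. \<psi> p (multiplicity p (fst de)) (multiplicity p (snd de)))"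
    unfolding CP_def by (rule expand2[OF P fin, symmetric])
  also have "\<dots> = (\<Sum>de\<in>CP N M. wp k m de)"
  proof (rule sum.cong[OF refl])
    fix de assume de: "de \<in> CP N M"
    obtain d e where dee: "de = (d, e)" by (cases de)
    have d0: "d > 0" "e > 0" "prime_factors d \<subseteq> PN N" "prime_factors e \<subseteq> PN N"
      using de dee by (auto simp: CP_def)
    have cop: "coprime d e" using CP_coprime de dee by simp
    have "(\<Prod>p\<in>PN N. \<psi> p (multiplicity p d) (multiplicity p e))
        = (\<Prod>p\<in>PN N. real_of_int (phi k (multiplicity p d))) * (\<Prod>p\<in>PN N. real_of_int (phi m (multiplicity p e)))
          / ((\<Prod>p\<in>PN N. real p ^ multiplicity p d) * (\<Prod>p\<in>PN N. real p ^ multiplicity p e))"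
      unfolding \<psi>_def by (simp add: prod.distrib prod_dividef power_add)
    also have "(\<Prod>p\<in>PN N. real_of_int (phi k (multiplicity p d))) = gR k d"
      unfolding gR_def using G_ext[OF P(1) d0(3) d0(1) P(2), of k] by simp
    also have "(\<Prod>p\<in>PN N. real_of_int (phi m (multiplicity p e))) = gR m e"
      unfolding gR_def using G_ext[OF P(1) d0(4) d0(2) P(2), of m] by simp
    also have "(\<Prod>p\<in>PN N. real p ^ multiplicity p d) = real d"
    proof -
      have "(\<Prod>p\<in>PN N. real p ^ multiplicity p d) = real (\<Prod>p\<in>PN N. p ^ multiplicity p d)" by simp
      also have "(\<Prod>p\<in>PN N. p ^ multiplicity p d) = d" using pw_mult[OF P d0(1) d0(3)] unfolding pw_def .
      finally show ?thesis .
    qed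
    also have "(\<Prod>p\<in>PN N. real p ^ multiplicity p e) = real e"
    proof -
      have "(\<Prod>p\<in>PN N. real p ^ multiplicity p e) = real (\<Prod>p\<in>PN N. p ^ multiplicity p e)" by simp
      also have "(\<Prod>p\<in>PN N. p ^ multiplicity p e) = e" using pw_mult[OF P d0(2) d0(4)] unfolding pw_def .
      finally show ?thesis .
    qed
    finally show "(\<Prod>p\<in>PN N. \<psi> p (multiplicity p (fst de)) (multiplicity p (snd de))) = wp k m de"
      using cop by (simp add: dee wp_def)
  qed
  finally show ?thesis .
qed

lemma CP_sub1:
  assumes "M \<ge> N"
  shows "{de\<in>{1..N}\<times>{1..N}. coprime (fst de) (snd de)} \<subseteq> CP N M"
proof
  fix de assume de: "de \<in> {de\<in>{1..N}\<times>{1..N}. coprime (fst de) (snd de)}"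
  obtain d e where dee: "de = (d, e)" by (cases de)
  have dd: "1 \<le> d" "d \<le> N" "1 \<le> e" "e \<le> N" "coprime d e" using de dee by auto
  have pf: "prime_factors x \<subseteq> PN N" if "1 \<le> x" "x \<le> N" for x
  proof
    fix p assume "p \<in> prime_factors x"
    then have "prime p" "p dvd x" by auto
    then have "p \<le> x" using that dvd_imp_le by auto
    then show "p \<in> PN N" using that \<open>prime p\<close> by (simp add: PN_def)
  qed
  have "\<forall>p\<in>PN N. (multiplicity p d, multiplicity p e) \<in> RM M"
  proof
    fix p assume pP: "p \<in> PN N"
    then have pp: "prime p" by (simp add: PN_def)
    have "multiplicity p d \<le> M" "multiplicity p e \<le> M"
      using mult_le_self[of d p] mult_le_self[of e p] pp dd assms by auto
    moreover have "multiplicity p d = 0 \<or> multiplicity p e = 0"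
    proof (rule ccontr)
      assume "\<not> ?thesis"
      then have pd: "p dvd d" and pe: "p dvd e" using pp dd
        by (auto simp: prime_multiplicity_gt_zero_iff[symmetric])
      have g: "p dvd gcd d e" using pd pe by (rule gcd_greatest)
      have g1: "gcd d e = 1" using dd(5) by (simp add: coprime_iff_gcd_eq_1)
      have "p dvd 1" using g unfolding g1 .
      then show False using pp by simp
    qed
    ultimately show "(multiplicity p d, multiplicity p e) \<in> RM M" by (auto simp: RM_def)
  qed
  then show "de \<in> CP N M" using dd pf dee by (auto simp: CP_def)
qed

lemma CP_sub2:
  "CP N M \<subseteq> {1..(\<Prod>p\<in>PN N. p ^ M)} \<times> {1..(\<Prod>p\<in>PN N. p ^ M)}"
proof
  have P: "finite (PN N)" "\<forall>p\<in>PN N. prime p" by (rule PN_props)+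
  have bd: "x \<le> (\<Prod>p\<in>PN N. p ^ M)" if "x > 0" "prime_factors x \<subseteq> PN N" "\<forall>p\<in>PN N. multiplicity p x \<le> M" for x
  proof -
    have "x = pw (PN N) (\<lambda>p. multiplicity p x)" using pw_mult[OF P that(1,2)] by simp
    also have "\<dots> \<le> (\<Prod>p\<in>PN N. p ^ M)" unfolding pw_def
      using that(3) P by (intro prod_mono) (auto intro!: power_increasing simp: prime_gt_0_nat Suc_le_eq)
    finally show ?thesis .
  qed
  fix de assume de: "de \<in> CP N M"
  obtain d e where dee: "de = (d, e)" by (cases de)
  have "d \<le> (\<Prod>p\<in>PN N. p ^ M)" using de dee by (intro bd) (auto simp: CP_def RM_def)
  moreover have "e \<le> (\<Prod>p\<in>PN N. p ^ M)" using de dee by (intro bd) (auto simp: CP_def RM_def)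
  moreover have "d > 0" "e > 0" using de dee by (auto simp: CP_def)
  ultimately show "de \<in> {1..(\<Prod>p\<in>PN N. p ^ M)} \<times> {1..(\<Prod>p\<in>PN N. p ^ M)}" using dee by auto
qed

lemma partial_close:
  assumes km: "k \<ge> 1" "m \<ge> 1" and N: "N \<ge> 1" and M: "M \<ge> N"
  shows "\<bar>(\<Sum>de\<in>CP N M. wp k m de) - boxs k m N N\<bar> \<le> tau 2 2 N N"
proof -
  define L where "L = (\<Prod>p\<in>PN N. p ^ M)"
  define B where "B = {1..N}\<times>{1..N}"
  define C where "C = CP N M"
  have CL: "C \<subseteq> {1..L}\<times>{1..L}" unfolding C_def L_def by (rule CP_sub2)
  have Cfin: "finite C" using CL by (rule finite_subset) auto
  have "(N, 1) \<in> C" unfolding C_def using CP_sub1[OF M] N by auto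
  then have NL: "N \<le> L" using CL by auto
  have Bfin: "finite B" unfolding B_def by auto
  have zero: "\<forall>de\<in>B - C. wp k m de = 0"
  proof
    fix de assume "de \<in> B - C"
    then have "\<not> coprime (fst de) (snd de)" using CP_sub1[OF M] unfolding B_def C_def by auto
    then show "wp k m de = 0" by (simp add: wp_def)
  qed
  have "(\<Sum>de\<in>C. wp k m de) = (\<Sum>de\<in>C - B. wp k m de) + (\<Sum>de\<in>C \<inter> B. wp k m de)"
    using sum.Int_Diff[OF Cfin, of "wp k m" B] by simp
  moreover have "(\<Sum>de\<in>B. wp k m de) = (\<Sum>de\<in>B - C. wp k m de) + (\<Sum>de\<in>B \<inter> C. wp k m de)"
    using sum.Int_Diff[OF Bfin, of "wp k m" C] by simp
  moreover have "(\<Sum>de\<in>B - C. wp k m de) = 0" using zero by simp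
  ultimately have "(\<Sum>de\<in>C. wp k m de) - (\<Sum>de\<in>B. wp k m de) = (\<Sum>de\<in>C - B. wp k m de)"
    by (simp add: inf_commute)
  then have "\<bar>(\<Sum>de\<in>C. wp k m de) - boxs k m N N\<bar> = \<bar>\<Sum>de\<in>C - B. wp k m de\<bar>"
    by (simp add: boxs_def B_def)
  also have "\<dots> \<le> (\<Sum>de\<in>C - B. \<bar>wp k m de\<bar>)" by (rule sum_abs)
  also have "\<dots> \<le> (\<Sum>de\<in>{1..L}\<times>{1..L} - {1..nat \<lfloor>real N\<rfloor>}\<times>{1..nat \<lfloor>real N\<rfloor>}. \<bar>wp k m de\<bar>)"
    using CL by (intro sum_mono2) (auto simp: B_def)
  also have "\<dots> \<le> tau 2 2 (real N) (real N)"
    using N NL tet_ge2 km by (intro diff_bound) auto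
  finally show ?thesis unfolding C_def by simp
qed

lemma P_close:
  assumes km: "k \<ge> 1" "m \<ge> 1" and N: "N \<ge> 1"
  shows "\<bar>(\<Prod>p\<in>PN N. 1 + suminf (aterm k m p)) - Sc k m\<bar> \<le> 2 * tau 2 2 N N"
proof -
  have lim: "(\<lambda>M. \<Prod>p\<in>PN N. 1 + (\<Sum>\<nu><M. aterm k m p \<nu>)) \<longlonglongrightarrow> (\<Prod>p\<in>PN N. 1 + suminf (aterm k m p))"
    using PN_props[of N] aterm_summable[OF km]
    by (intro tendsto_prod tendsto_add tendsto_const summable_LIMSEQ) auto
  have "(\<lambda>M. \<bar>(\<Prod>p\<in>PN N. 1 + (\<Sum>\<nu><M. aterm k m p \<nu>)) - Sc k m\<bar>) \<longlonglongrightarrow> \<bar>(\<Prod>p\<in>PN N. 1 + suminf (aterm k m p)) - Sc k m\<bar>"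
    by (intro tendsto_intros lim)
  then show ?thesis
  proof (rule LIMSEQ_le_const2)
    show "\<exists>N0. \<forall>M\<ge>N0. \<bar>(\<Prod>p\<in>PN N. 1 + (\<Sum>\<nu><M. aterm k m p \<nu>)) - Sc k m\<bar> \<le> 2 * tau 2 2 N N"
    proof (intro exI[of _ N] allI impI)
      fix M assume M: "M \<ge> N"
      have t2: "2 \<le> tet 2 k" "2 \<le> tet 2 m" using tet_ge2 km by auto
      have a: "\<bar>(\<Sum>de\<in>CP N M. wp k m de) - boxs k m N N\<bar> \<le> tau 2 2 N N"
        by (rule partial_close[OF km N M])
      have b: "\<bar>Sc k m - boxs k m (nat \<lfloor>real N\<rfloor>) (nat \<lfloor>real N\<rfloor>)\<bar> \<le> tau 2 2 N N"
        using N by (intro Sc_bound[OF km t2]) auto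
      show "\<bar>(\<Prod>p\<in>PN N. 1 + (\<Sum>\<nu><M. aterm k m p \<nu>)) - Sc k m\<bar> \<le> 2 * tau 2 2 N N"
        using a b unfolding partial_eq[OF km] by simp
    qed
  qed
qed

lemma c_eq_Sc:
  assumes km: "k \<ge> 1" "m \<ge> 1"
  shows "c k m = Sc k m"
proof -
  have "(\<lambda>N. (\<Prod>p\<in>PN N. 1 + suminf (aterm k m p)) - Sc k m) \<longlonglongrightarrow> 0"
  proof (rule Lim_null_comparison)
    show "eventually (\<lambda>N. norm ((\<Prod>p\<in>PN N. 1 + suminf (aterm k m p)) - Sc k m) \<le> 2 * tau 2 2 N N) sequentially"
      using P_close[OF km] unfolding eventually_sequentially by (intro exI[of _ 1]) auto
    show "(\<lambda>N. 2 * tau 2 2 (real N) (real N)) \<longlonglongrightarrow> 0"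
      using tendsto_mult_right_zero[OF tau_lim[of 2 2]] by simp
  qed
  then have "(\<lambda>N. \<Prod>p\<in>PN N. 1 + suminf (aterm k m p)) \<longlonglongrightarrow> Sc k m"
    by (simp add: Lim_null[symmetric])
  then show ?thesis unfolding c_unfold by (rule limI)
qed


definition fR :: "nat \<Rightarrow> nat \<Rightarrow> real" where "fR k n = real_of_int (f k n)"

lemma fR_01: "fR k n = (if H n \<le> k then 1 else 0)" by (simp add: fR_def f_def)

lemma Hcount_sum:
  assumes "x \<ge> 0"
  shows "real (Hcount k m x) = (\<Sum>n\<in>{1..nat \<lfloor>x\<rfloor>}. fR k n * fR m (n+1))"
proof -
  have "{n::nat. 1 \<le> n \<and> real n \<le> x \<and> H n \<le> k \<and> H (n+1) \<le> m} = {n\<in>{1..nat \<lfloor>x\<rfloor>}. H n \<le> k \<and> H (n+1) \<le> m}"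
    using assms le_nat_floor by (auto simp: le_nat_iff le_floor_iff)
  then have "real (Hcount k m x) = real (card {n\<in>{1..nat \<lfloor>x\<rfloor>}. H n \<le> k \<and> H (n+1) \<le> m})"
    by (simp add: Hcount_def)
  also have "\<dots> = (\<Sum>n\<in>{n\<in>{1..nat \<lfloor>x\<rfloor>}. H n \<le> k \<and> H (n+1) \<le> m}. 1)" by simp
  also have "\<dots> = (\<Sum>n\<in>{1..nat \<lfloor>x\<rfloor>}. if H n \<le> k \<and> H (n+1) \<le> m then 1 else 0)"
    by (rule sum.inter_filter) simp
  also have "\<dots> = (\<Sum>n\<in>{1..nat \<lfloor>x\<rfloor>}. fR k n * fR m (n+1))"
    by (intro sum.cong refl) (simp add: fR_01)
  finally show ?thesis .
qed

lemma f_div_sum: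
  assumes "k \<ge> 1" "n \<ge> 1" "n \<le> Y"
  shows "fR k n = (\<Sum>d\<in>{1..Y}. if d dvd n then gR k d else 0)"
proof -
  have "fR k n = (\<Sum>d | d dvd n. gR k d)"
    unfolding fR_def gR_def f_sum_G[OF assms(2,1)] by simp
  also have "{d. d dvd n} = {d\<in>{1..Y}. d dvd n}"
    using assms by (auto dest: dvd_imp_le intro: Nat.gr0I)
  also have "(\<Sum>d\<in>{d\<in>{1..Y}. d dvd n}. gR k d) = (\<Sum>d\<in>{1..Y}. if d dvd n then gR k d else 0)"
    by (rule sum.inter_filter) simp
  finally show ?thesis .
qed

lemma N_decomp:
  assumes "k \<ge> 1" "m \<ge> 1"
  shows "(\<Sum>n\<in>{1..X}. fR k n * fR m (n+1)) = (\<Sum>e\<in>{1..X+1}. gR m e * (\<Sum>n\<in>{1..X}. if e dvd n+1 then fR k n else 0))"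
proof -
  have "(\<Sum>n\<in>{1..X}. fR k n * fR m (n+1)) = (\<Sum>n\<in>{1..X}. \<Sum>e\<in>{1..X+1}. if e dvd n+1 then fR k n * gR m e else 0)"
  proof (rule sum.cong[OF refl])
    fix n assume n: "n \<in> {1..X}"
    have "fR m (n+1) = (\<Sum>e\<in>{1..X+1}. if e dvd n+1 then gR m e else 0)"
      using n by (intro f_div_sum assms) auto
    then have "fR k n * fR m (n+1) = (\<Sum>e\<in>{1..X+1}. fR k n * (if e dvd n+1 then gR m e else 0))"
      by (simp only: sum_distrib_left)
    also have "\<dots> = (\<Sum>e\<in>{1..X+1}. if e dvd n+1 then fR k n * gR m e else 0)"
      by (intro sum.cong refl) simp
    finally show "fR k n * fR m (n+1) = (\<Sum>e\<in>{1..X+1}. if e dvd n+1 then fR k n * gR m e else 0)" .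
  qed
  also have "\<dots> = (\<Sum>e\<in>{1..X+1}. \<Sum>n\<in>{1..X}. if e dvd n+1 then fR k n * gR m e else 0)"
    by (rule sum.swap)
  also have "\<dots> = (\<Sum>e\<in>{1..X+1}. gR m e * (\<Sum>n\<in>{1..X}. if e dvd n+1 then fR k n else 0))"
    by (simp add: sum_distrib_left if_distrib mult.commute cong: if_cong)
  finally show ?thesis .
qed

lemma Sx_decomp:
  assumes "k \<ge> 1"
  shows "(\<Sum>n\<in>{1..X}. if e dvd n+1 then fR k n else 0) = (\<Sum>d\<in>{1..X}. gR k d * real (card {n\<in>{1..X}. d dvd n \<and> e dvd n + 1}))"
proof -
  have "(\<Sum>n\<in>{1..X}. if e dvd n+1 then fR k n else 0) = (\<Sum>n\<in>{1..X}. \<Sum>d\<in>{1..X}. if d dvd n \<and> e dvd n+1 then gR k d else 0)"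
  proof (rule sum.cong[OF refl])
    fix n assume n: "n \<in> {1..X}"
    have "fR k n = (\<Sum>d\<in>{1..X}. if d dvd n then gR k d else 0)"
      using n by (intro f_div_sum assms) auto
    then show "(if e dvd n+1 then fR k n else 0) = (\<Sum>d\<in>{1..X}. if d dvd n \<and> e dvd n+1 then gR k d else 0)"
      by (auto intro: sum.cong)
  qed
  also have "\<dots> = (\<Sum>d\<in>{1..X}. \<Sum>n\<in>{1..X}. if d dvd n \<and> e dvd n+1 then gR k d else 0)"
    by (rule sum.swap)
  also have "\<dots> = (\<Sum>d\<in>{1..X}. gR k d * real (card {n\<in>{1..X}. d dvd n \<and> e dvd n + 1}))"
  proof (rule sum.cong[OF refl])
    fix d
    have "(\<Sum>n\<in>{1..X}. if d dvd n \<and> e dvd n+1 then gR k d else 0) = (\<Sum>n\<in>{n\<in>{1..X}. d dvd n \<and> e dvd n+1}. gR k d)"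
      by (rule sum.inter_filter[symmetric]) simp
    then show "(\<Sum>n\<in>{1..X}. if d dvd n \<and> e dvd n+1 then gR k d else 0) = gR k d * real (card {n\<in>{1..X}. d dvd n \<and> e dvd n + 1})"
      by simp
  qed
  finally show ?thesis .
qed

lemma ind_count:
  assumes "t \<ge> 1" "x \<ge> 1"
  shows "(\<Sum>d\<in>{1..nat \<lfloor>x\<rfloor>}. ind t d) \<le> kappa ^ t * x powr (1 / t)"
proof -
  have "(\<Sum>d\<in>{1..nat \<lfloor>x\<rfloor>}. ind t d) = (\<Sum>d\<in>{d. 0 < d \<and> real d \<le> x \<and> full t d}. 1)"
  proof (rule sum.mono_neutral_cong_right)
    show "{d. 0 < d \<and> real d \<le> x \<and> full t d} \<subseteq> {1..nat \<lfloor>x\<rfloor>}"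
      using le_nat_floor by auto
  qed (use assms in \<open>auto simp: ind_def le_nat_iff le_floor_iff\<close>)
  also have "\<dots> = real (card {d. 0 < d \<and> real d \<le> x \<and> full t d})" by simp
  also have "\<dots> \<le> kappa ^ t * x powr (1 / t)" using assms by (intro count_bound) auto
  finally show ?thesis .
qed


lemma main_bound:
  assumes k0: "1 \<le> k0" "k0 \<le> k" and m0: "1 \<le> m0" "m0 \<le> m" and x: "x \<ge> 2"
  shows "\<bar>real (Hcount k m x) - c k m * x\<bar> \<le> 21 * (kappa ^ tet 2 k0 * kappa ^ tet 2 m0) *
     x powr (1 / real (tet 2 k0) + 1 / real (tet 2 m0) - 1 / (real (tet 2 k0) * real (tet 2 m0)))"
proof -
  define a where "a = tet 2 k0"
  define b where "b = tet 2 m0"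
  have km: "k \<ge> 1" "m \<ge> 1" using k0 m0 by auto
  have a2: "a \<ge> 2" "b \<ge> 2" unfolding a_def b_def using tet_ge2 k0 m0 by auto
  have ak: "a \<le> tet 2 k" "b \<le> tet 2 m" unfolding a_def b_def using tet_mono k0 m0 by auto
  have ra: "real a \<ge> 2" "real b \<ge> 2" using a2 by auto
  define X where "X = nat \<lfloor>x\<rfloor>"
  define E where "E = x powr (1 - 1 / real a)"
  define Eb where "Eb = nat \<lfloor>E\<rfloor>"
  define ex where "ex = 1 / real a + 1 / real b - 1 / (real a * real b)"
  define A where "A = kappa ^ a"
  define B where "B = kappa ^ b"
  define xe where "xe = x powr ex"
  have A1: "A \<ge> 1" unfolding A_def using kappa_ge1 by simp
  have B1: "B \<ge> 1" unfolding B_def using kappa_ge1 by simp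
  have x1: "x \<ge> 1" using x by simp
  have x0: "x > 0" using x by simp
  have E1: "E \<ge> 1" unfolding E_def using x1 ra by (intro ge_one_powr_ge_zero) auto
  have Ex: "E \<le> x"
  proof -
    have "E \<le> x powr 1" unfolding E_def using x1 ra by (intro powr_mono) auto
    then show ?thesis using x0 by simp
  qed
  have EbX: "Eb \<le> X" unfolding Eb_def X_def using Ex by (simp add: nat_mono floor_mono)
  have P2: "x * E powr (1 / real b - 1) = xe"
  proof -
    have "E powr (1 / real b - 1) = x powr ((1 - 1 / real a) * (1 / real b - 1))"
      unfolding E_def by (simp add: powr_powr)
    then have "x * E powr (1 / real b - 1) = x powr (1 + (1 - 1 / real a) * (1 / real b - 1))"
      using x0 by (simp add: powr_add)
    also have "1 + (1 - 1 / real a) * (1 / real b - 1) = ex"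
      unfolding ex_def using ra by (simp add: field_simps)
    finally show ?thesis unfolding xe_def .
  qed
  have P3: "x powr (1 / real a) * E powr (1 / real b) = xe"
  proof -
    have "E powr (1 / real b) = x powr ((1 - 1 / real a) * (1 / real b))"
      unfolding E_def by (simp add: powr_powr)
    then have "x powr (1 / real a) * E powr (1 / real b) = x powr (1 / real a + (1 - 1 / real a) * (1 / real b))"
      by (simp add: powr_add)
    also have "1 / real a + (1 - 1 / real a) * (1 / real b) = ex"
      unfolding ex_def using ra by (simp add: field_simps)
    finally show ?thesis unfolding xe_def .
  qed
  have P4: "x powr (1 / real a) \<le> xe"
  proof -
    have "1 / real a \<le> ex"
    proof -
      have "ex - 1 / real a = (1 / real b) * (1 - 1 / real a)" unfolding ex_def using ra by (simp add: field_simps)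
      moreover have "(1 / real b) * (1 - 1 / real a) \<ge> 0" using ra by (intro mult_nonneg_nonneg) auto
      ultimately show ?thesis by linarith
    qed
    then show ?thesis unfolding xe_def using x1 by (rule powr_mono)
  qed
  have xe0: "xe \<ge> 0" unfolding xe_def by simp
  define h where "h = gR m"
  define g where "g = gR k"
  define Sx where "Sx = (\<lambda>e. \<Sum>n\<in>{1..X}. if e dvd n+1 then fR k n else 0)"
  have N_eq: "real (Hcount k m x) = (\<Sum>e\<in>{1..X+1}. h e * Sx e)"
  proof -
    have "real (Hcount k m x) = (\<Sum>n\<in>{1..X}. fR k n * fR m (n+1))"
      unfolding X_def using x0 by (intro Hcount_sum) auto
    also have "\<dots> = (\<Sum>e\<in>{1..X+1}. gR m e * (\<Sum>n\<in>{1..X}. if e dvd n+1 then fR k n else 0))"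
      by (rule N_decomp[OF km])
    finally show ?thesis unfolding h_def Sx_def .
  qed
  have split: "{1..X+1} = {1..Eb} \<union> {Eb<..X+1}" using EbX by auto
  have N_split: "real (Hcount k m x) = (\<Sum>e\<in>{1..Eb}. h e * Sx e) + (\<Sum>e\<in>{Eb<..X+1}. h e * Sx e)"
    unfolding N_eq split by (rule sum.union_disjoint) auto
  have big: "\<bar>\<Sum>e\<in>{Eb<..X+1}. h e * Sx e\<bar> \<le> 6 * B * xe"
  proof -
    have "\<bar>\<Sum>e\<in>{Eb<..X+1}. h e * Sx e\<bar> \<le> (\<Sum>e\<in>{Eb<..X+1}. \<bar>h e * Sx e\<bar>)" by (rule sum_abs)
    also have "\<dots> \<le> (\<Sum>e\<in>{Eb<..X+1}. (3 * x) * (ind b e / real e))"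
    proof (rule sum_mono)
      fix e assume e: "e \<in> {Eb<..X+1}"
      then have e1: "e \<ge> 1" "e \<le> X + 1" by auto
      have "\<bar>Sx e\<bar> \<le> (\<Sum>n\<in>{1..X}. \<bar>if e dvd n+1 then fR k n else 0\<bar>)" unfolding Sx_def by (rule sum_abs)
      also have "\<dots> \<le> (\<Sum>n\<in>{1..X}. if e dvd n+1 then 1 else 0)"
        by (intro sum_mono) (auto simp: fR_01)
      also have "\<dots> = real (card {n\<in>{1..X}. e dvd n+1})"
        by (subst sum.inter_filter[symmetric]) auto
      also have "\<dots> \<le> 3 * x / real e" unfolding X_def using e1 x1 by (intro Tbig_bound) (auto simp: X_def)
      finally have Sxb: "\<bar>Sx e\<bar> \<le> 3 * x / real e" .
      have hb: "\<bar>h e\<bar> \<le> ind b e" unfolding h_def using gR_bound km ak by auto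
      have "\<bar>h e * Sx e\<bar> \<le> ind b e * (3 * x / real e)"
        unfolding abs_mult using hb Sxb by (intro mult_mono) (auto simp: ind_def)
      then show "\<bar>h e * Sx e\<bar> \<le> (3 * x) * (ind b e / real e)" by (simp add: mult_ac)
    qed
    also have "\<dots> = (3 * x) * (\<Sum>e\<in>{Eb<..X+1}. ind b e / real e)" by (simp add: sum_distrib_left)
    also have "\<dots> \<le> (3 * x) * (2 * kappa ^ b * E powr (1 / real b - 1))"
      unfolding Eb_def using x0 by (intro mult_left_mono ind_sum_tail a2 E1) auto
    also have "\<dots> = 6 * B * (x * E powr (1 / real b - 1))" unfolding B_def by simp
    also have "\<dots> = 6 * B * xe" using P2 by simp
    finally show ?thesis .
  qed
  have small: "\<bar>(\<Sum>e\<in>{1..Eb}. h e * Sx e) - x * boxs k m X Eb\<bar> \<le> 3 * (A * B) * xe"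
  proof -
    have s1: "(\<Sum>e\<in>{1..Eb}. h e * Sx e) = (\<Sum>e\<in>{1..Eb}. \<Sum>d\<in>{1..X}. h e * g d * real (card {n\<in>{1..X}. d dvd n \<and> e dvd n + 1}))"
      unfolding Sx_def Sx_decomp[OF km(1)] g_def by (simp add: sum_distrib_left mult.assoc)
    have s2: "x * boxs k m X Eb = (\<Sum>e\<in>{1..Eb}. \<Sum>d\<in>{1..X}. x * wp k m (d, e))"
    proof -
      have "x * boxs k m X Eb = (\<Sum>d\<in>{1..X}. \<Sum>e\<in>{1..Eb}. x * wp k m (d, e))"
        unfolding boxs_def sum_distrib_left by (subst sum.cartesian_product) (simp add: case_prod_unfold)
      also have "\<dots> = (\<Sum>e\<in>{1..Eb}. \<Sum>d\<in>{1..X}. x * wp k m (d, e))" by (rule sum.swap)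
      finally show ?thesis .
    qed
    have "\<bar>(\<Sum>e\<in>{1..Eb}. h e * Sx e) - x * boxs k m X Eb\<bar>
        = \<bar>\<Sum>e\<in>{1..Eb}. \<Sum>d\<in>{1..X}. h e * g d * real (card {n\<in>{1..X}. d dvd n \<and> e dvd n + 1}) - x * wp k m (d, e)\<bar>"
      unfolding s1 s2 by (simp add: sum_subtractf)
    also have "\<dots> \<le> (\<Sum>e\<in>{1..Eb}. \<Sum>d\<in>{1..X}. \<bar>h e * g d * real (card {n\<in>{1..X}. d dvd n \<and> e dvd n + 1}) - x * wp k m (d, e)\<bar>)"
      by (rule order_trans[OF sum_abs sum_mono[OF sum_abs]])
    also have "\<dots> \<le> (\<Sum>e\<in>{1..Eb}. \<Sum>d\<in>{1..X}. 3 * (ind a d * ind b e))"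
    proof (intro sum_mono)
      fix e d assume e: "e \<in> {1..Eb}" and d: "d \<in> {1..X}"
      have hb: "\<bar>h e\<bar> \<le> ind b e" unfolding h_def using gR_bound km ak by auto
      have gb: "\<bar>g d\<bar> \<le> ind a d" unfolding g_def using gR_bound km ak by auto
      show "\<bar>h e * g d * real (card {n\<in>{1..X}. d dvd n \<and> e dvd n + 1}) - x * wp k m (d, e)\<bar> \<le> 3 * (ind a d * ind b e)"
      proof (cases "coprime d e")
        case True
        have "h e * g d * real (card {n\<in>{1..X}. d dvd n \<and> e dvd n + 1}) - x * wp k m (d, e)
            = (h e * g d) * (real (card {n\<in>{1..X}. d dvd n \<and> e dvd n + 1}) - x / (real d * real e))"
          using True unfolding wp_def g_def h_def by (simp add: field_simps)
        also have "\<bar>\<dots>\<bar> \<le> (ind b e * ind a d) * 3"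
          unfolding abs_mult
        proof (rule mult_mono)
          show "\<bar>h e\<bar> * \<bar>g d\<bar> \<le> ind b e * ind a d" using hb gb by (intro mult_mono) (auto simp: ind_def)
          show "\<bar>real (card {n\<in>{1..X}. d dvd n \<and> e dvd n + 1}) - x / (real d * real e)\<bar> \<le> 3"
            unfolding X_def using e d x1 True by (intro T_bound) auto
        qed (auto simp: ind_def)
        finally show ?thesis by (simp add: mult_ac)
      next
        case False
        then have "card {n\<in>{1..X}. d dvd n \<and> e dvd n + 1} = 0"
          by (simp only: T_noncoprime[OF False] card.empty)
        moreover have "wp k m (d, e) = 0" using False by (simp add: wp_def)
        ultimately have "h e * g d * real (card {n\<in>{1..X}. d dvd n \<and> e dvd n + 1}) - x * wp k m (d, e) = 0"
          by simp
        then show ?thesis by (simp add: ind_def)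
      qed
    qed
    also have "\<dots> = 3 * ((\<Sum>d\<in>{1..X}. ind a d) * (\<Sum>e\<in>{1..Eb}. ind b e))"
      by (simp add: sum_distrib_left sum_distrib_right mult_ac sum.swap[of _ "{1..Eb}"])
    also have "\<dots> \<le> 3 * ((A * x powr (1 / real a)) * (B * E powr (1 / real b)))"
      unfolding A_def B_def X_def Eb_def
      using a2 x1 E1
      by (intro mult_left_mono mult_mono ind_count sum_nonneg) (auto simp: ind_def kappa_pos less_imp_le intro!: mult_nonneg_nonneg zero_le_power)
    also have "\<dots> = 3 * (A * B) * (x powr (1 / real a) * E powr (1 / real b))" by (simp add: mult_ac)
    also have "\<dots> = 3 * (A * B) * xe" using P3 by simp
    finally show ?thesis .
  qed
  have cS: "c k m = Sc k m" by (rule c_eq_Sc[OF km])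
  have mainb: "\<bar>x * boxs k m X Eb - c k m * x\<bar> \<le> 12 * (A * B) * xe"
  proof -
    have e1: "x * boxs k m X Eb - c k m * x = - (x * (Sc k m - boxs k m X Eb))"
      unfolding cS by (simp add: algebra_simps)
    have "\<bar>x * boxs k m X Eb - c k m * x\<bar> = x * \<bar>Sc k m - boxs k m X Eb\<bar>"
      unfolding e1 abs_minus_cancel abs_mult using x0 by simp
    also have "\<dots> = x * \<bar>Sc k m - boxs k m (nat \<lfloor>x\<rfloor>) (nat \<lfloor>E\<rfloor>)\<bar>" by (simp add: X_def Eb_def)
    finally have "\<bar>x * boxs k m X Eb - c k m * x\<bar> = x * \<bar>Sc k m - boxs k m (nat \<lfloor>x\<rfloor>) (nat \<lfloor>E\<rfloor>)\<bar>" .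
    also have "\<dots> \<le> x * tau a b x E"
      using x0 by (intro mult_left_mono Sc_bound km ak a2 x1 E1) auto
    also have "x * tau a b x E = 2 * A * (x * x powr (1 / real a - 1)) * (1 + 2 * B) + (1 + 2 * A) * (2 * B * (x * E powr (1 / real b - 1)))"
      unfolding tau_def A_def B_def by (simp add: algebra_simps)
    also have "x * x powr (1 / real a - 1) = x powr (1 / real a)"
      using x0 by (simp add: powr_add[symmetric] powr_diff)
    also have "x * E powr (1 / real b - 1) = xe" by (rule P2)
    also have "2 * A * x powr (1 / real a) * (1 + 2 * B) + (1 + 2 * A) * (2 * B * xe) \<le> 2 * A * xe * (3 * B) + (3 * A) * (2 * B * xe)"
    proof (rule add_mono)
      show "2 * A * x powr (1 / real a) * (1 + 2 * B) \<le> 2 * A * xe * (3 * B)"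
        using P4 A1 B1 xe0 by (intro mult_mono) auto
      show "(1 + 2 * A) * (2 * B * xe) \<le> (3 * A) * (2 * B * xe)"
        using A1 B1 xe0 by (intro mult_right_mono) auto
    qed
    also have "\<dots> = 12 * (A * B) * xe" by (simp add: algebra_simps)
    finally show ?thesis .
  qed
  have "\<bar>real (Hcount k m x) - c k m * x\<bar>
      \<le> \<bar>(\<Sum>e\<in>{1..Eb}. h e * Sx e) - x * boxs k m X Eb\<bar> + \<bar>\<Sum>e\<in>{Eb<..X+1}. h e * Sx e\<bar> + \<bar>x * boxs k m X Eb - c k m * x\<bar>"
    unfolding N_split by linarith
  also have "\<dots> \<le> 3 * (A * B) * xe + 6 * B * xe + 12 * (A * B) * xe"
    using small big mainb by linarith
  also have "\<dots> \<le> 21 * (A * B) * xe"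
  proof -
    have "B * xe \<le> (A * B) * xe" using A1 B1 xe0 by (intro mult_right_mono) auto
    then show ?thesis by linarith
  qed
  finally show ?thesis unfolding A_def B_def xe_def ex_def a_def b_def .
qed


theorem lemma8:
  "\<exists>C::real. \<forall>k m k0 m0. \<forall>x::real.
     1 \<le> k0 \<and> k0 \<le> k \<and> 1 \<le> m0 \<and> m0 \<le> m \<and> x \<ge> 2 \<longrightarrow>
     (let \<alpha> = real (tet 2 k0); \<beta> = real (tet 2 m0) in
       \<bar>real (Hcount k m x) - c k m * x\<bar>
         \<le> C * (\<alpha> * \<beta> * kappa powr (\<alpha> + \<beta>) * x powr (1/\<alpha> + 1/\<beta> - 1/(\<alpha>*\<beta>)) * (ln x)\<^sup>2))"
proof (intro exI[of _ 21] allI impI)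
  fix k m k0 m0 :: nat and x :: real
  assume h: "1 \<le> k0 \<and> k0 \<le> k \<and> 1 \<le> m0 \<and> m0 \<le> m \<and> x \<ge> 2"
  define a where "a = tet 2 k0"
  define b where "b = tet 2 m0"
  have a2: "real a \<ge> 2" "real b \<ge> 2" unfolding a_def b_def using tet_ge2 h by auto
  define Q where "Q = kappa ^ a * kappa ^ b * x powr (1 / real a + 1 / real b - 1 / (real a * real b))"
  have Q0: "Q \<ge> 0" unfolding Q_def using kappa_pos by simp
  have mb: "\<bar>real (Hcount k m x) - c k m * x\<bar> \<le> 21 * Q"
    using main_bound[of k0 k m0 m x] h unfolding Q_def a_def b_def by (simp add: mult.assoc)
  have kp: "kappa powr (real a + real b) = kappa ^ a * kappa ^ b"
    using kappa_pos by (simp add: powr_add powr_realpow)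
  have lx: "ln x \<ge> 2/3"
  proof -
    have "ln (2::real) \<ge> 2/3" by (rule ln2_ge_two_thirds)
    moreover have "ln 2 \<le> ln x" using h by simp
    ultimately show ?thesis by linarith
  qed
  have "(ln x)^2 \<ge> (2/3)^2" using lx by (intro power_mono) auto
  then have l2: "(ln x)^2 \<ge> 4/9" by (simp add: power2_eq_square)
  have ab4: "real a * real b \<ge> 4" using a2 mult_mono[OF a2(1) a2(2)] by simp
  have one: "real a * real b * (ln x)^2 \<ge> 1"
  proof -
    have "real a * real b * (ln x)^2 \<ge> 4 * (4/9)" using ab4 l2 by (intro mult_mono) auto
    then show ?thesis by simp
  qed
  have "21 * Q \<le> 21 * (real a * real b * (ln x)^2 * Q)"
    using one Q0 mult_right_mono[OF one Q0] by simp
  also have "real a * real b * (ln x)^2 * Q = real a * real b * kappa powr (real a + real b) *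
      x powr (1 / real a + 1 / real b - 1 / (real a * real b)) * (ln x)^2"
    unfolding Q_def kp by (simp add: mult_ac)
  finally show "let \<alpha> = real (tet 2 k0); \<beta> = real (tet 2 m0) in
       \<bar>real (Hcount k m x) - c k m * x\<bar>
         \<le> 21 * (\<alpha> * \<beta> * kappa powr (\<alpha> + \<beta>) * x powr (1/\<alpha> + 1/\<beta> - 1/(\<alpha>*\<beta>)) * (ln x)\<^sup>2)"
    using mb unfolding Let_def a_def b_def by linarith
qed


end
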